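(* Let $n\ge1$ and let $c:E_n\to\mathbb C$ be an admissible edge weighting of $Q_n$. (1) If $Q_n(c) = \bigcup_\ell Q_n^{(\ell)}$ for pairwise disjoint sub-hypercubes $Q_n^{(\ell)}\subset Q_n$, then $\rho_c$ is a direct sum of irreducible representations $\rho^{(\ell)}$, where $\rho^{(\ell)}(p_x)=0$ for all vertices $x\notin Q_n^{(\ell)}$. In particular, $\rho_c$ is irreducible if and only if $Q_n(c)$ is a single sub-hypercube of $Q_n$. (2) If $c':E_n\to\mathbb C$ is another admissible edge weighting, then $\rho_c$ and $\rho_{c'}$ are unitarily equivalent if and only if $Q_n(c')=Q_n(c)$ and there are $\lambda_x\in S^1$, $x\in U_n(c)\cup V_n(c)$, with $c'(ij) = \lambda_i\lambda_jc(ij)$ for all $ij\in E_n(c)$. (3) For every rank-one representation $\rho$ of $C^\ast(Q_n)$ on a Hilbert space $\mathcal H$ there exists an admissible edge weighting $c$ of $Q_n$ such that $\rho$ is unitarily equivalent to $\rho_c$.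
   Context: For $n\ge1$, identify integers $0\le i<2^n$ with their $n$-digit binary representations; $i\#k$ is $i$ with its $k$-th digit flipped. The hypercube $Q_n$ has vertex classes $U_n$ (even number of $1$'s) and $V_n$ (odd number of $1$'s) and edge set $E_n$ of pairs $ij$ ($i\in U_n$, $j\in V_n$, $j=i\#k$ for some $k<n$); $\mathcal N(x)$ denotes the neighbors of $x$. $C^\ast(Q_n)$ is the universal unital C*-algebra generated by projections $p_x$ ($x\in U_n\cup V_n$) with $\sum_{u\in U_n}p_u=1=\sum_{v\in V_n}p_v$ and $p_up_v=0$ for non-adjacent $u,v$. A representation $\rho$ is rank-one if each $\rho(p_x)$ is zero or a rank-one projection. For $c:E_n\to\mathbb{C}$, $Q_n(c)=(U_n(c),V_n(c),E_n(c))$ is the subgraph formed by the edges with $c(ij)\ne0$ and their endpoints; $c$ is admissible if $\sum_{i\in\mathcal N(j_1)\cap\mathcal N(j_2)}c(ij_1)\overline{c(ij_2)}=\delta_{j_1j_2}$ for $j_1,j_2\in V_n(c)$ and $\sum_{j\in\mathcal N(i_1)\cap\mathcal N(i_2)}c(i_1j)\overline{c(i_2j)}=\delta_{i_1i_2}$ for $i_1,i_2\in U_n(c)$. For admissible $c$, $\rho_c:C^\ast(Q_n)\to M_{U_n(c)}=B(\mathbb C^{U_n(c)})$ is the representation with $\rho_c(p_i)=E_{ii}$ ($i\in U_n(c)$), $\rho_c(p_j)$ the projection onto the span of the unit vector $(c(ij))_{i\in U_n(c)}$ ($j\in V_n(c)$, with $c(ij):=0$ for non-adjacent $i,j$), and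 $\rho_c(p_x)=0$ otherwise. A sub-hypercube of $Q_n$ is, for a set $K\subseteq\{0,\dots,n-1\}$ and a vertex $a$, the subgraph induced by all vertices agreeing with $a$ in every binary digit outside $K$. *)

theory Defs
  imports Complex_Main
begin

text \<open>Vertices are the integers 0 <= i < 2^n; the k-th binary digit of i is bit i k;
  i#k is flip_bit k i.\<close>

definition ones :: "nat \<Rightarrow> nat \<Rightarrow> nat" where
  "ones n i = card {k. k < n \<and> bit i k}"

definition Uv :: "nat \<Rightarrow> nat set" where
  "Uv n = {i. i < 2 ^ n \<and> even (ones n i)}"

definition Vv :: "nat \<Rightarrow> nat set" where
  "Vv n = {j. j < 2 ^ n \<and> odd (ones n j)}"

definition verts :: "nat \<Rightarrow> nat set" where
  "verts n = Uv n \<union> Vv n"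

definition Ed :: "nat \<Rightarrow> (nat \<times> nat) set" where
  "Ed n = {(i, j). i \<in> Uv n \<and> j \<in> Vv n \<and> (\<exists>k<n. j = flip_bit k i)}"

definition nbrs :: "nat \<Rightarrow> nat \<Rightarrow> nat set" where
  "nbrs n x = {y. (x, y) \<in> Ed n \<or> (y, x) \<in> Ed n}"

text \<open>An edge weighting c : E_n -> C is represented by a function c i j; only its values
  on edges (i,j) in E_n matter. ce extends it by 0 to non-adjacent pairs.\<close>

definition ce :: "nat \<Rightarrow> (nat \<Rightarrow> nat \<Rightarrow> complex) \<Rightarrow> nat \<Rightarrow> nat \<Rightarrow> complex" where
  "ce n c i j = (if (i, j) \<in> Ed n then c i j else 0)"

definition Ec :: "nat \<Rightarrow> (nat \<Rightarrow> nat \<Rightarrow> complex) \<Rightarrow> (nat \<times> nat) set" where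
  "Ec n c = {(i, j). (i, j) \<in> Ed n \<and> c i j \<noteq> 0}"

definition Uc :: "nat \<Rightarrow> (nat \<Rightarrow> nat \<Rightarrow> complex) \<Rightarrow> nat set" where
  "Uc n c = fst ` Ec n c"

definition Vc :: "nat \<Rightarrow> (nat \<Rightarrow> nat \<Rightarrow> complex) \<Rightarrow> nat set" where
  "Vc n c = snd ` Ec n c"

definition admissible :: "nat \<Rightarrow> (nat \<Rightarrow> nat \<Rightarrow> complex) \<Rightarrow> bool" where
  "admissible n c \<longleftrightarrow>
     (\<forall>j1\<in>Vc n c. \<forall>j2\<in>Vc n c.
        (\<Sum>i\<in>nbrs n j1 \<inter> nbrs n j2. c i j1 * cnj (c i j2)) = (if j1 = j2 then 1 else 0)) \<and>
     (\<forall>i1\<in>Uc n c. \<forall>i2\<in>Uc n c.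
        (\<Sum>j\<in>nbrs n i1 \<inter> nbrs n i2. c i1 j * cnj (c i2 j)) = (if i1 = i2 then 1 else 0))"

definition subcube_verts :: "nat \<Rightarrow> nat set \<Rightarrow> nat \<Rightarrow> nat set" where
  "subcube_verts n K a = {x. x < 2 ^ n \<and> (\<forall>k<n. k \<notin> K \<longrightarrow> bit x k = bit a k)}"

definition induced_edges :: "nat \<Rightarrow> nat set \<Rightarrow> (nat \<times> nat) set" where
  "induced_edges n X = {(i, j). (i, j) \<in> Ed n \<and> i \<in> X \<and> j \<in> X}"

definition is_subcube :: "nat \<Rightarrow> nat set \<Rightarrow> bool" where
  "is_subcube n X \<longleftrightarrow> (\<exists>K a. K \<subseteq> {..<n} \<and> a < 2 ^ n \<and> X = subcube_verts n K a)"

text \<open>A linear map C^I -> C^J is a function A :: 'j => 'i => complex vanishing outside J x I.\<close>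

definition mat_on :: "'j set \<Rightarrow> 'i set \<Rightarrow> ('j \<Rightarrow> 'i \<Rightarrow> complex) \<Rightarrow> bool" where
  "mat_on J I A \<longleftrightarrow> (\<forall>a b. a \<notin> J \<or> b \<notin> I \<longrightarrow> A a b = 0)"

definition mm :: "'k set \<Rightarrow> ('a \<Rightarrow> 'k \<Rightarrow> complex) \<Rightarrow> ('k \<Rightarrow> 'b \<Rightarrow> complex) \<Rightarrow> 'a \<Rightarrow> 'b \<Rightarrow> complex" where
  "mm K A B = (\<lambda>a b. \<Sum>k\<in>K. A a k * B k b)"

definition adj :: "('a \<Rightarrow> 'b \<Rightarrow> complex) \<Rightarrow> 'b \<Rightarrow> 'a \<Rightarrow> complex" where
  "adj A = (\<lambda>b a. cnj (A a b))"

definition idm :: "'a set \<Rightarrow> 'a \<Rightarrow> 'a \<Rightarrow> complex" where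
  "idm I = (\<lambda>a b. if a = b \<and> a \<in> I then 1 else 0)"

definition is_proj :: "'a set \<Rightarrow> ('a \<Rightarrow> 'a \<Rightarrow> complex) \<Rightarrow> bool" where
  "is_proj I P \<longleftrightarrow> mat_on I I P \<and> mm I P P = P \<and> adj P = P"

definition is_rank_one_proj :: "'a set \<Rightarrow> ('a \<Rightarrow> 'a \<Rightarrow> complex) \<Rightarrow> bool" where
  "is_rank_one_proj I P \<longleftrightarrow>
     (\<exists>v. (\<forall>a. a \<notin> I \<longrightarrow> v a = 0) \<and> (\<Sum>a\<in>I. (cmod (v a))\<^sup>2) = 1 \<and>
          P = (\<lambda>a b. v a * cnj (v b)))"

text \<open>By the universal property, a unital *-representation of C*(Q_n) on C^I is the same as
  a family of projections rho x (x a vertex) satisfying the defining relations.\<close>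

definition is_rep :: "nat \<Rightarrow> 'a set \<Rightarrow> (nat \<Rightarrow> 'a \<Rightarrow> 'a \<Rightarrow> complex) \<Rightarrow> bool" where
  "is_rep n I \<rho> \<longleftrightarrow>
     (\<forall>x\<in>verts n. is_proj I (\<rho> x)) \<and>
     (\<lambda>a b. \<Sum>u\<in>Uv n. \<rho> u a b) = idm I \<and> (\<lambda>a b. \<Sum>v\<in>Vv n. \<rho> v a b) = idm I \<and>
     (\<forall>u\<in>Uv n. \<forall>v\<in>Vv n. v \<notin> nbrs n u \<longrightarrow> mm I (\<rho> u) (\<rho> v) = (\<lambda>_ _. 0))"

definition is_rank_one_rep :: "nat \<Rightarrow> 'a set \<Rightarrow> (nat \<Rightarrow> 'a \<Rightarrow> 'a \<Rightarrow> complex) \<Rightarrow> bool" where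
  "is_rank_one_rep n I \<rho> \<longleftrightarrow>
     is_rep n I \<rho> \<and> (\<forall>x\<in>verts n. \<rho> x = (\<lambda>_ _. 0) \<or> is_rank_one_proj I (\<rho> x))"

definition unit_equiv ::
  "nat \<Rightarrow> 'a set \<Rightarrow> (nat \<Rightarrow> 'a \<Rightarrow> 'a \<Rightarrow> complex) \<Rightarrow> 'b set \<Rightarrow> (nat \<Rightarrow> 'b \<Rightarrow> 'b \<Rightarrow> complex) \<Rightarrow> bool" where
  "unit_equiv n I \<rho> J \<rho>' \<longleftrightarrow>
     (\<exists>U :: 'b \<Rightarrow> 'a \<Rightarrow> complex. mat_on J I U \<and> mm I U (adj U) = idm J \<and> mm J (adj U) U = idm I \<and>
        (\<forall>x\<in>verts n. mm I (mm I U (\<rho> x)) (adj U) = \<rho>' x))"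

text \<open>The subrepresentation of rho on the reducing subspace ran P (P an orthogonal projection
  commuting with rho) is irreducible: ran P is nonzero and has no nontrivial reducing subspace.\<close>
definition irreducible_on :: "nat \<Rightarrow> 'a set \<Rightarrow> ('a \<Rightarrow> 'a \<Rightarrow> complex) \<Rightarrow> (nat \<Rightarrow> 'a \<Rightarrow> 'a \<Rightarrow> complex) \<Rightarrow> bool" where
  "irreducible_on n I P \<rho> \<longleftrightarrow>
     P \<noteq> (\<lambda>_ _. 0) \<and>
     (\<forall>Q. is_proj I Q \<and> mm I Q P = Q \<and> (\<forall>x\<in>verts n. mm I Q (\<rho> x) = mm I (\<rho> x) Q)
          \<longrightarrow> Q = (\<lambda>_ _. 0) \<or> Q = P)"

definition irreducible :: "nat \<Rightarrow> 'a set \<Rightarrow> (nat \<Rightarrow> 'a \<Rightarrow> 'a \<Rightarrow> complex) \<Rightarrow> bool" where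
  "irreducible n I \<rho> \<longleftrightarrow> irreducible_on n I (idm I) \<rho>"

text \<open>rho is the (internal, orthogonal) direct sum of the subrepresentations rho^(X) = rho(.) P X
  for X in the index family Xs, with rho^(X)(p_x) = 0 for x not in X, each irreducible.\<close>
definition direct_sum_irred ::
  "nat \<Rightarrow> 'a set \<Rightarrow> (nat \<Rightarrow> 'a \<Rightarrow> 'a \<Rightarrow> complex) \<Rightarrow> nat set set \<Rightarrow> bool" where
  "direct_sum_irred n I \<rho> Xs \<longleftrightarrow>
     (\<exists>P :: nat set \<Rightarrow> 'a \<Rightarrow> 'a \<Rightarrow> complex.
        (\<forall>X\<in>Xs. is_proj I (P X)) \<and>
        (\<forall>X\<in>Xs. \<forall>Y\<in>Xs. X \<noteq> Y \<longrightarrow> mm I (P X) (P Y) = (\<lambda>_ _. 0)) \<and>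
        (\<lambda>a b. \<Sum>X\<in>Xs. P X a b) = idm I \<and>
        (\<forall>X\<in>Xs. \<forall>x\<in>verts n. mm I (P X) (\<rho> x) = mm I (\<rho> x) (P X)) \<and>
        (\<forall>X\<in>Xs. irreducible_on n I (P X) \<rho>) \<and>
        (\<forall>X\<in>Xs. \<forall>x\<in>verts n. x \<notin> X \<longrightarrow> mm I (\<rho> x) (P X) = (\<lambda>_ _. 0)))"

definition rho_c :: "nat \<Rightarrow> (nat \<Rightarrow> nat \<Rightarrow> complex) \<Rightarrow> nat \<Rightarrow> nat \<Rightarrow> nat \<Rightarrow> complex" where
  "rho_c n c x =
     (if x \<in> Uc n c then (\<lambda>a b. if a = x \<and> b = x then 1 else 0)
      else if x \<in> Vc n c then (\<lambda>a b. ce n c a x * cnj (ce n c b x))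
      else (\<lambda>_ _. 0))"

end

theory Submission
  imports Defs
begin

lemma flip_lt: "x < 2^n \<Longrightarrow> k < n \<Longrightarrow> flip_bit k (x::nat) < 2^n"
  by (metis take_bit_nat_eq_self_iff take_bit_flip_bit_eq not_le)

lemma flip_flip[simp]: "flip_bit k (flip_bit k (x::nat)) = x"
  by (rule bit_eqI) (auto simp: bit_flip_bit_iff)

lemma bit_ge: "(x::nat) < 2^n \<Longrightarrow> n \<le> k \<Longrightarrow> \<not> bit x k"
  by (metis bit_take_bit_iff not_le take_bit_nat_eq_self_iff)

lemma ones_flip:
  assumes "k < n" shows "odd (ones n (flip_bit k x)) \<longleftrightarrow> even (ones n x)"
proof -
  let ?S = "{k'. k' < n \<and> bit x k'}"
  have fin: "finite ?S" by simp
  show ?thesis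
  proof (cases "bit x k")
    case True
    have "{k'. k' < n \<and> bit (flip_bit k x) k'} = ?S - {k}"
      using True by (auto simp: bit_flip_bit_iff)
    moreover have "k \<in> ?S" using True assms by auto
    ultimately have "ones n (flip_bit k x) + 1 = ones n x"
      unfolding ones_def using fin card_Diff1_less[OF fin, of k] by (simp add: card_Diff_singleton)
    then show ?thesis by (metis even_Suc Suc_eq_plus1)
  next
    case False
    have "{k'. k' < n \<and> bit (flip_bit k x) k'} = insert k ?S"
      using assms False by (auto simp: bit_flip_bit_iff)
    moreover have "k \<notin> ?S" using False by auto
    ultimately have "ones n (flip_bit k x) = ones n x + 1"
      unfolding ones_def using fin by simp
    then show ?thesis by simp
  qed
qed

lemma UV_disj: "x \<in> Uv n \<Longrightarrow> x \<notin> Vv n"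
  by (auto simp: Uv_def Vv_def)

lemma flip_U: "x \<in> Uv n \<Longrightarrow> k < n \<Longrightarrow> flip_bit k x \<in> Vv n"
  using ones_flip[of k n x] flip_lt by (auto simp: Uv_def Vv_def)
lemma flip_V: "x \<in> Vv n \<Longrightarrow> k < n \<Longrightarrow> flip_bit k x \<in> Uv n"
  using ones_flip[of k n x] flip_lt by (auto simp: Uv_def Vv_def)

lemma verts_lt: "x \<in> verts n \<longleftrightarrow> x < 2^n"
  by (auto simp: verts_def Uv_def Vv_def)

lemma nbrs_iff: "y \<in> nbrs n x \<longleftrightarrow> x < 2^n \<and> (\<exists>k<n. y = flip_bit k x)"
proof
  assume "y \<in> nbrs n x"
  then have "(x,y) \<in> Ed n \<or> (y,x) \<in> Ed n" by (simp add: nbrs_def)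
  then show "x < 2^n \<and> (\<exists>k<n. y = flip_bit k x)"
  proof
    assume "(x,y) \<in> Ed n"
    then have "x \<in> Uv n" "\<exists>k<n. y = flip_bit k x" by (auto simp: Ed_def)
    then show ?thesis by (simp add: Uv_def)
  next
    assume "(y,x) \<in> Ed n"
    then have "y \<in> Uv n" "\<exists>k<n. x = flip_bit k y" by (auto simp: Ed_def)
    then obtain k where "k<n" "x = flip_bit k y" "y < 2^n" by (auto simp: Uv_def)
    then show ?thesis using flip_lt[of y n k] flip_flip[of k y] by auto
  qed
next
  assume a: "x < 2^n \<and> (\<exists>k<n. y = flip_bit k x)"
  then obtain k where k: "k<n" "y = flip_bit k x" by auto
  have "x \<in> Uv n \<or> x \<in> Vv n" using a by (auto simp: Uv_def Vv_def)
  then show "y \<in> nbrs n x"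
  proof
    assume "x \<in> Uv n" then have "(x,y) \<in> Ed n" using k flip_U unfolding Ed_def by blast
    then show ?thesis unfolding nbrs_def by blast
  next
    assume "x \<in> Vv n"
    then have "y \<in> Uv n" "x = flip_bit k y" using k flip_V by auto
    then have "(y,x) \<in> Ed n" using k \<open>x \<in> Vv n\<close> unfolding Ed_def by blast
    then show ?thesis unfolding nbrs_def by blast
  qed
qed

lemma Ed_fin: "finite (Ed n)"
proof -
  have "Ed n \<subseteq> {..<2^n} \<times> {..<2^n}" by (auto simp: Ed_def Uv_def Vv_def)
  then show ?thesis by (rule finite_subset) auto
qed

lemma Ed_UV: "(i,j) \<in> Ed n \<Longrightarrow> i \<in> Uv n \<and> j \<in> Vv n"
  by (auto simp: Ed_def)

lemma Ed_nbrs: "(i,j) \<in> Ed n \<longleftrightarrow> i \<in> Uv n \<and> j \<in> nbrs n i"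
  by (auto simp: nbrs_def Ed_def dest: UV_disj)

lemma Ed_nbrs2: "(i,j) \<in> Ed n \<longleftrightarrow> j \<in> Vv n \<and> i \<in> nbrs n j"
  by (auto simp: nbrs_def Ed_def dest: UV_disj)

lemma Ec_Ed: "(i,j) \<in> Ec n c \<Longrightarrow> (i,j) \<in> Ed n \<and> c i j \<noteq> 0"
  by (auto simp: Ec_def)

lemma Uc_Uv: "x \<in> Uc n c \<Longrightarrow> x \<in> Uv n"
  by (auto simp: Uc_def Ec_def Ed_def)
lemma Vc_Vv: "x \<in> Vc n c \<Longrightarrow> x \<in> Vv n"
  by (auto simp: Vc_def Ec_def Ed_def)

lemma Uc_iff: "i \<in> Uc n c \<longleftrightarrow> (\<exists>j. (i,j) \<in> Ec n c)"
  by (force simp: Uc_def)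
lemma Vc_iff: "j \<in> Vc n c \<longleftrightarrow> (\<exists>i. (i,j) \<in> Ec n c)"
  by (force simp: Vc_def)

lemma Ec_fin: "finite (Ec n c)"
  by (rule finite_subset[OF _ Ed_fin[of n]]) (auto simp: Ec_def)
lemma Uc_fin: "finite (Uc n c)" unfolding Uc_def using Ec_fin by simp
lemma Vc_fin: "finite (Vc n c)" unfolding Vc_def using Ec_fin by simp

lemma Ec_in_U: "(i,j) \<in> Ec n c \<Longrightarrow> i \<in> Uc n c" by (auto simp: Uc_iff)
lemma Ec_in_V: "(i,j) \<in> Ec n c \<Longrightarrow> j \<in> Vc n c" by (auto simp: Vc_iff)

lemma Ed_c_U: "(i,j) \<in> Ed n \<Longrightarrow> i \<notin> Uc n c \<Longrightarrow> c i j = 0"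
  by (auto simp: Uc_iff Ec_def)
lemma Ed_c_V: "(i,j) \<in> Ed n \<Longrightarrow> j \<notin> Vc n c \<Longrightarrow> c i j = 0"
  by (auto simp: Vc_iff Ec_def)

lemma ce_U: "i \<notin> Uc n c \<Longrightarrow> ce n c i j = 0"
  by (auto simp: ce_def Ed_c_U)
lemma ce_V: "j \<notin> Vc n c \<Longrightarrow> ce n c i j = 0"
  by (auto simp: ce_def Ed_c_V)
lemma ce_nz: "ce n c i j \<noteq> 0 \<longleftrightarrow> (i,j) \<in> Ec n c"
  by (auto simp: ce_def Ec_def)

lemma subcube_flip:
  "x \<in> subcube_verts n K a \<Longrightarrow> k \<in> K \<Longrightarrow> k < n \<Longrightarrow> flip_bit k x \<in> subcube_verts n K a"
  by (auto simp: subcube_verts_def flip_lt bit_flip_bit_iff)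

lemma subcube_a: "a < 2^n \<Longrightarrow> a \<in> subcube_verts n K a"
  by (auto simp: subcube_verts_def)

lemma subcube_diff_K:
  "x \<in> subcube_verts n K a \<Longrightarrow> y \<in> subcube_verts n K a \<Longrightarrow> k < n \<Longrightarrow> bit x k \<noteq> bit y k \<Longrightarrow> k \<in> K"
  by (auto simp: subcube_verts_def)

lemma subcube_flip_in:
  assumes "x \<in> subcube_verts n K a" "flip_bit k x \<in> subcube_verts n K a" "k < n"
  shows "k \<in> K"
  using subcube_diff_K[OF assms(1,2,3)] by (auto simp: bit_flip_bit_iff)

lemma subcube_induct:
  assumes a: "a < 2^n" and K: "K \<subseteq> {..<n}" and base: "P a"
    and step: "\<And>x k. x \<in> subcube_verts n K a \<Longrightarrow> k \<in> K \<Longrightarrow> P x \<Longrightarrow> P (flip_bit k x)"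
    and x: "x \<in> subcube_verts n K a"
  shows "P x"
proof -
  define dd where "dd x = {k. k < n \<and> bit x k \<noteq> bit a k}" for x :: nat
  have "\<forall>x. x \<in> subcube_verts n K a \<and> card (dd x) = m \<longrightarrow> P x" for m
  proof (induction m)
    case 0
    show ?case
    proof (intro allI impI)
      fix x assume h: "x \<in> subcube_verts n K a \<and> card (dd x) = 0"
      then have "dd x = {}" by (simp add: dd_def)
      have "bit x p = bit a p" for p
      proof (cases "p < n")
        case True then show ?thesis using \<open>dd x = {}\<close> unfolding dd_def by blast
      next
        case False then show ?thesis using bit_ge[OF a, of p] bit_ge[of x n p] h
          by (simp add: subcube_verts_def)
      qed
      then have "x = a" by (rule bit_eqI)
      then show "P x" using base by simp
    qed
  next
    case (Suc m)
    show ?case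
    proof (intro allI impI)
      fix x assume h: "x \<in> subcube_verts n K a \<and> card (dd x) = Suc m"
      then obtain k where k: "k \<in> dd x" by fastforce
      have kK: "k \<in> K" "k < n" using k h a subcube_diff_K[of x n K a a k] subcube_a[of a n K]
        by (auto simp: dd_def)
      let ?x = "flip_bit k x"
      have x': "?x \<in> subcube_verts n K a" using subcube_flip[OF _ kK] h by auto
      have "dd ?x = dd x - {k}" using k by (auto simp: dd_def bit_flip_bit_iff)
      then have "card (dd ?x) = m" using h k by (simp add: dd_def)
      then have "P ?x" using Suc x' by blast
      then have "P (flip_bit k ?x)" using step[OF x' kK(1)] by blast
      then show "P x" by simp
    qed
  qed
  then show ?thesis using x by blast
qed

lemma two_flips:
  assumes "flip_bit m (flip_bit k (x::nat)) = flip_bit m' (flip_bit l x)" "k \<noteq> l"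
  shows "(m = k \<and> m' = l) \<or> (m = l \<and> m' = k)"
proof -
  have e: "\<And>p. bit (flip_bit m (flip_bit k x)) p = bit (flip_bit m' (flip_bit l x)) p"
    using assms by simp
  show ?thesis using e[of k] e[of l] e[of m] e[of m'] assms(2)
    by (simp add: bit_flip_bit_iff) blast
qed

lemma nbrs_inter:
  assumes x: "x < 2^n" and kl: "k < n" "l < n" "k \<noteq> l"
  shows "nbrs n (flip_bit k x) \<inter> nbrs n (flip_bit l x) = {x, flip_bit k (flip_bit l x)}"
proof -
  have c: "flip_bit k (flip_bit l x) = flip_bit l (flip_bit k x)"
    by (rule bit_eqI) (auto simp: bit_flip_bit_iff)
  show ?thesis
  proof
    show "nbrs n (flip_bit k x) \<inter> nbrs n (flip_bit l x) \<subseteq> {x, flip_bit k (flip_bit l x)}"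
    proof
      fix y assume "y \<in> nbrs n (flip_bit k x) \<inter> nbrs n (flip_bit l x)"
      then have "\<exists>m. y = flip_bit m (flip_bit k x)" "\<exists>m'. y = flip_bit m' (flip_bit l x)"
        by (auto simp: nbrs_iff)
      then obtain m m' where "y = flip_bit m (flip_bit k x)" "y = flip_bit m' (flip_bit l x)"
        by blast
      then show "y \<in> {x, flip_bit k (flip_bit l x)}" using two_flips[of m k x m' l] kl c by auto
    qed
  next
    show "{x, flip_bit k (flip_bit l x)} \<subseteq> nbrs n (flip_bit k x) \<inter> nbrs n (flip_bit l x)"
    proof -
      have "x \<in> nbrs n (flip_bit k x)" "x \<in> nbrs n (flip_bit l x)"
        using x kl flip_lt[OF x] flip_flip unfolding nbrs_iff by metis+
      moreover have "flip_bit k (flip_bit l x) \<in> nbrs n (flip_bit k x)"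
        using x kl flip_lt[OF x] c unfolding nbrs_iff by metis
      moreover have "flip_bit k (flip_bit l x) \<in> nbrs n (flip_bit l x)"
        using x kl flip_lt[OF x] unfolding nbrs_iff by metis
      ultimately show ?thesis by auto
    qed
  qed
qed

lemma flip_neq: "flip_bit k (x::nat) \<noteq> x"
proof
  assume "flip_bit k x = x"
  then have "bit (flip_bit k x) k = bit x k" by simp
  then show False by (simp add: bit_flip_bit_iff)
qed

lemma flip2_neq: "k \<noteq> l \<Longrightarrow> flip_bit k (flip_bit l (x::nat)) \<noteq> x"
proof
  assume "k \<noteq> l" "flip_bit k (flip_bit l x) = x"
  then have "bit (flip_bit k (flip_bit l x)) k = bit x k" by simp
  then show False using \<open>k \<noteq> l\<close> by (simp add: bit_flip_bit_iff)
qed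

lemma mm_idm_l:
  assumes "finite K" "S \<subseteq> K"
  shows "mm K (idm S) R = (\<lambda>a b. if a \<in> S then R a b else 0)"
proof (rule ext, rule ext)
  fix a b
  have "mm K (idm S) R a b = (\<Sum>k\<in>K. if k = a then (if a \<in> S then R k b else 0) else 0)"
    unfolding mm_def idm_def by (rule sum.cong) auto
  also have "\<dots> = (if a \<in> S then R a b else 0)" using assms by (simp add: sum.delta') blast
  finally show "mm K (idm S) R a b = (if a \<in> S then R a b else 0)" .
qed

lemma mm_idm_r:
  assumes "finite K" "S \<subseteq> K"
  shows "mm K R (idm S) = (\<lambda>a b. if b \<in> S then R a b else 0)"
proof (rule ext, rule ext)
  fix a b
  have "mm K R (idm S) a b = (\<Sum>k\<in>K. if k = b then (if b \<in> S then R a k else 0) else 0)"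
    unfolding mm_def idm_def by (rule sum.cong) auto
  also have "\<dots> = (if b \<in> S then R a b else 0)" using assms by (simp add: sum.delta') blast
  finally show "mm K R (idm S) a b = (if b \<in> S then R a b else 0)" .
qed

lemma idm_proj: "finite K \<Longrightarrow> S \<subseteq> K \<Longrightarrow> is_proj K (idm S)"
  unfolding is_proj_def
  by (auto simp: mm_idm_l mat_on_def adj_def fun_eq_iff) (auto simp: idm_def)

lemma rho_c_U: "x \<in> Uc n c \<Longrightarrow> rho_c n c x = idm {x}"
  by (auto simp: rho_c_def idm_def fun_eq_iff)

lemma rho_c_V: "x \<in> Vc n c \<Longrightarrow> rho_c n c x = (\<lambda>a b. ce n c a x * cnj (ce n c b x))"
  using Uc_Uv Vc_Vv UV_disj by (fastforce simp: rho_c_def)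

lemma rho_c_0: "x \<notin> Uc n c \<Longrightarrow> x \<notin> Vc n c \<Longrightarrow> rho_c n c x = (\<lambda>_ _. 0)"
  by (auto simp: rho_c_def)

definition closed_set :: "nat \<Rightarrow> (nat \<Rightarrow> nat \<Rightarrow> complex) \<Rightarrow> nat set \<Rightarrow> bool" where
  "closed_set n c X \<longleftrightarrow> (\<forall>i j. (i,j) \<in> Ec n c \<longrightarrow> (i \<in> X \<longleftrightarrow> j \<in> X))"

lemma rho_nz:
  assumes "rho_c n c x a b \<noteq> 0"
  shows "(x \<in> Uc n c \<and> a = x \<and> b = x) \<or> (x \<in> Vc n c \<and> (a,x) \<in> Ec n c \<and> (b,x) \<in> Ec n c)"
proof (cases "x \<in> Uc n c")
  case True then show ?thesis using assms by (auto simp: rho_c_U idm_def split: if_splits)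
next
  case False
  show ?thesis
  proof (cases "x \<in> Vc n c")
    case True then show ?thesis using assms False by (auto simp: rho_c_V ce_nz)
  next
    case False2: False
    then show ?thesis using assms False by (simp add: rho_c_0)
  qed
qed

lemma comm_closed:
  assumes "closed_set n c X"
  shows "mm (Uc n c) (idm (X \<inter> Uc n c)) (rho_c n c x) = mm (Uc n c) (rho_c n c x) (idm (X \<inter> Uc n c))"
proof -
  have "\<And>a b. rho_c n c x a b \<noteq> 0 \<Longrightarrow> (a \<in> X \<inter> Uc n c \<longleftrightarrow> b \<in> X \<inter> Uc n c)"
  proof -
    fix a b assume "rho_c n c x a b \<noteq> 0"
    from rho_nz[OF this] show "(a \<in> X \<inter> Uc n c \<longleftrightarrow> b \<in> X \<inter> Uc n c)"
    proof
      assume "x \<in> Vc n c \<and> (a,x) \<in> Ec n c \<and> (b,x) \<in> Ec n c"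
      then show ?thesis using assms Ec_in_U unfolding closed_set_def by blast
    qed auto
  qed
  then show ?thesis using Uc_fin
    by (auto simp: mm_idm_l mm_idm_r fun_eq_iff)
qed

lemma zero_closed:
  assumes "closed_set n c X" "x \<notin> X"
  shows "mm (Uc n c) (rho_c n c x) (idm (X \<inter> Uc n c)) = (\<lambda>_ _. 0)"
proof -
  have "\<And>a b. rho_c n c x a b \<noteq> 0 \<Longrightarrow> b \<notin> X"
  proof -
    fix a b assume "rho_c n c x a b \<noteq> 0"
    from rho_nz[OF this] show "b \<notin> X"
    proof
      assume "x \<in> Vc n c \<and> (a,x) \<in> Ec n c \<and> (b,x) \<in> Ec n c"
      then show ?thesis using assms unfolding closed_set_def by blast
    qed (use assms in auto)
  qed
  then show ?thesis using Uc_fin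
    by (auto simp: mm_idm_r fun_eq_iff)
qed

definition conn_set :: "nat \<Rightarrow> (nat \<Rightarrow> nat \<Rightarrow> complex) \<Rightarrow> nat set \<Rightarrow> bool" where
  "conn_set n c X \<longleftrightarrow> (\<forall>f :: nat \<Rightarrow> complex. (\<forall>i j. (i,j) \<in> Ec n c \<longrightarrow> i \<in> X \<longrightarrow> j \<in> X \<longrightarrow> f i = f j)
      \<longrightarrow> (\<forall>x\<in>X. \<forall>y\<in>X. f x = f y))"

lemma ifm1: "(if P then u else 0) * (v::complex) = (if P then u*v else 0)" by simp
lemma ifm2: "(v::complex) * (if P then u else 0) = (if P then v*u else 0)" by simp

lemma Uc_verts: "x \<in> Uc n c \<Longrightarrow> x \<in> verts n"
  using Uc_Uv by (auto simp: verts_def)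
lemma Vc_verts: "x \<in> Vc n c \<Longrightarrow> x \<in> verts n"
  using Vc_Vv by (auto simp: verts_def)

lemma irred_closed:
  assumes cl: "closed_set n c X" and cn: "conn_set n c X" and ne: "X \<inter> Uc n c \<noteq> {}"
  shows "irreducible_on n (Uc n c) (idm (X \<inter> Uc n c)) (rho_c n c)"
  unfolding irreducible_on_def
proof (intro conjI allI impI)
  let ?U = "Uc n c" and ?S = "X \<inter> Uc n c"
  have fU: "finite ?U" by (rule Uc_fin)
  obtain s where s: "s \<in> ?S" using ne by blast
  show "idm ?S \<noteq> (\<lambda>_ _. 0)"
  proof
    assume "idm ?S = (\<lambda>_ _. 0)"
    then have "idm ?S s s = 0" by simp
    then show False using s by (simp add: idm_def)
  qed
  fix Q assume h: "is_proj ?U Q \<and> mm ?U Q (idm ?S) = Q \<and>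
      (\<forall>x\<in>verts n. mm ?U Q (rho_c n c x) = mm ?U (rho_c n c x) Q)"
  have mo: "mat_on ?U ?U Q" and QQ: "mm ?U Q Q = Q" using h by (auto simp: is_proj_def)
  define q where "q a = Q a a" for a
  have offd: "Q a b = 0" if "a \<noteq> b" for a b
  proof (cases "a \<in> ?U")
    case True
    have "mm ?U Q (rho_c n c a) = mm ?U (rho_c n c a) Q" using h True Uc_verts by blast
    then have "mm ?U Q (idm {a}) a b = mm ?U (idm {a}) Q a b" using True by (simp add: rho_c_U)
    then show ?thesis using True that fU by (simp add: mm_idm_l mm_idm_r)
  next
    case False then show ?thesis using mo by (simp add: mat_on_def)
  qed
  have Qd: "Q = (\<lambda>a b. if a = b then q a else 0)"
    using offd by (auto simp: q_def fun_eq_iff)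
  have qout: "q a = 0" if "a \<notin> ?U" for a using mo that by (simp add: mat_on_def q_def)
  have qS: "q a = 0" if "a \<notin> ?S" for a
  proof -
    have "mm ?U Q (idm ?S) a a = Q a a" using h by simp
    then show ?thesis using that fU by (simp add: mm_idm_r q_def split: if_splits)
  qed
  have q01: "q a = 0 \<or> q a = 1" for a
  proof (cases "a \<in> ?U")
    case True
    have "mm ?U Q Q a a = Q a a" using QQ by simp
    moreover have "mm ?U Q Q a a = q a * q a"
      unfolding mm_def using True fU by (subst Qd)+ (simp add: sum.delta' ifm1 ifm2 cong: if_cong)
    ultimately have "q a * q a = q a" by (simp add: q_def)
    then have "q a * (q a - 1) = 0" by (simp add: algebra_simps)
    then show ?thesis by simp
  next
    case False then show ?thesis using qout by simp
  qed
  have mmQl: "mm ?U Q R = (\<lambda>a b. q a * R a b)" for R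
  proof (rule ext, rule ext)
    fix a b
    show "mm ?U Q R a b = q a * R a b"
    proof (cases "a \<in> ?U")
      case True then show ?thesis unfolding mm_def using fU
        by (subst Qd) (simp add: ifm1 ifm2 sum.delta cong: if_cong)
    next
      case False then show ?thesis unfolding mm_def using qout fU
        by (subst Qd) (auto simp: ifm1 ifm2 sum.delta sum.delta' cong: if_cong)
    qed
  qed
  have mmQr: "mm ?U R Q = (\<lambda>a b. R a b * q b)" for R
  proof (rule ext, rule ext)
    fix a b
    show "mm ?U R Q a b = R a b * q b"
    proof (cases "b \<in> ?U")
      case True then show ?thesis unfolding mm_def using fU
        by (subst Qd) (simp add: ifm1 ifm2 sum.delta' cong: if_cong)
    next
      case False then show ?thesis unfolding mm_def using qout fU
        by (subst Qd) (auto simp: ifm1 ifm2 sum.delta sum.delta' cong: if_cong)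
    qed
  qed
  have qeq: "q a = q b" if "(a,j) \<in> Ec n c" "(b,j) \<in> Ec n c" for a b j
  proof -
    have j: "j \<in> Vc n c" using that Ec_in_V by blast
    have "j \<in> verts n" using j by (rule Vc_verts)
    then have "mm ?U Q (rho_c n c j) = mm ?U (rho_c n c j) Q" using h by blast
    then have "mm ?U Q (rho_c n c j) a b = mm ?U (rho_c n c j) Q a b" by simp
    then have "q a * (ce n c a j * cnj (ce n c b j)) = ce n c a j * cnj (ce n c b j) * q b"
      using j by (simp add: mmQl mmQr rho_c_V)
    moreover have "ce n c a j * cnj (ce n c b j) \<noteq> 0" using that by (simp add: ce_nz)
    ultimately show ?thesis by (simp add: mult.commute)
  qed
  define f where "f x = (if x \<in> Uv n then q x else q (SOME i. (i,x) \<in> Ec n c))" for x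
  have "\<forall>i j. (i,j) \<in> Ec n c \<longrightarrow> i \<in> X \<longrightarrow> j \<in> X \<longrightarrow> f i = f j"
  proof (intro allI impI)
    fix i j assume e: "(i,j) \<in> Ec n c"
    then have "i \<in> Uv n" "j \<notin> Uv n" using Ec_Ed Ed_UV UV_disj by blast+
    moreover have "(SOME i. (i,j) \<in> Ec n c, j) \<in> Ec n c" using e by (rule someI)
    then have "q i = q (SOME i. (i,j) \<in> Ec n c)" using qeq e by blast
    ultimately show "f i = f j" unfolding f_def by simp
  qed
  then have fc: "\<forall>x\<in>X. \<forall>y\<in>X. f x = f y" using cn unfolding conn_set_def by blast
  have qc: "q a = q s" if "a \<in> ?S" for a
  proof -
    have "f a = f s" using fc that s by blast
    moreover have "a \<in> Uv n" "s \<in> Uv n" using that s Uc_Uv by blast+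
    ultimately show ?thesis unfolding f_def by simp
  qed
  from q01[of s] show "Q = (\<lambda>_ _. 0) \<or> Q = idm ?S"
  proof
    assume "q s = 0"
    then have "q a = 0" for a using qc[of a] qS[of a] by (cases "a \<in> ?S") auto
    then have "Q = (\<lambda>_ _. 0)" by (simp add: Qd fun_eq_iff)
    then show ?thesis by blast
  next
    assume "q s = 1"
    then have "q a = (if a \<in> ?S then 1 else 0)" for a using qc[of a] qS[of a] by (cases "a \<in> ?S") auto
    then show ?thesis by (auto simp: Qd idm_def fun_eq_iff)
  qed
qed

lemma subcube_conn:
  assumes K: "K \<subseteq> {..<n}" and a: "a < 2^n" and ind: "induced_edges n (subcube_verts n K a) \<subseteq> Ec n c"
  shows "conn_set n c (subcube_verts n K a)"
  unfolding conn_set_def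
proof (intro allI impI ballI)
  let ?X = "subcube_verts n K a"
  fix f :: "nat \<Rightarrow> complex" and x y
  assume f: "\<forall>i j. (i, j) \<in> Ec n c \<longrightarrow> i \<in> ?X \<longrightarrow> j \<in> ?X \<longrightarrow> f i = f j"
  have all: "f z = f a" if "z \<in> ?X" for z
  proof (rule subcube_induct[OF a K, where P = "\<lambda>z. f z = f a"])
    show "f a = f a" by simp
    show "z \<in> ?X" by (rule that)
  next
    fix x k assume x: "x \<in> ?X" and k: "k \<in> K" and fx: "f x = f a"
    have kn: "k < n" using k K by auto
    have xn: "x < 2^n" using x by (simp add: subcube_verts_def)
    have y: "flip_bit k x \<in> ?X" using subcube_flip[OF x k kn] .
    have "flip_bit k x \<in> nbrs n x" using xn kn by (auto simp: nbrs_iff)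
    then have "(x, flip_bit k x) \<in> Ed n \<or> (flip_bit k x, x) \<in> Ed n" by (simp add: nbrs_def)
    then have "(x, flip_bit k x) \<in> Ec n c \<or> (flip_bit k x, x) \<in> Ec n c"
      using ind x y unfolding induced_edges_def by blast
    then show "f (flip_bit k x) = f a"
    proof
      assume "(x, flip_bit k x) \<in> Ec n c"
      then have "f x = f (flip_bit k x)" using f x y by blast
      then show ?thesis using fx by simp
    next
      assume "(flip_bit k x, x) \<in> Ec n c"
      then have "f (flip_bit k x) = f x" using f x y by blast
      then show ?thesis using fx by simp
    qed
  qed
  fix x y assume "x \<in> ?X" "y \<in> ?X"
  then show "f x = f y" using all by simp
qed

lemma sum_blocks:
  assumes fin: "finite Xs" and disj: "\<forall>X\<in>Xs. \<forall>Y\<in>Xs. X \<noteq> Y \<longrightarrow> X \<inter> Y = {}"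
  shows "(\<Sum>X\<in>Xs. (if a \<in> X then (1::complex) else 0)) = (if a \<in> \<Union>Xs then 1 else 0)"
proof (cases "a \<in> \<Union>Xs")
  case True
  then obtain X0 where X0: "X0 \<in> Xs" "a \<in> X0" by blast
  have "(\<Sum>X\<in>Xs. (if a \<in> X then (1::complex) else 0)) = (\<Sum>X\<in>Xs. (if X = X0 then 1 else 0))"
    by (rule sum.cong) (use X0 disj in auto)
  also have "\<dots> = 1" using fin X0 by (simp add: sum.delta)
  finally show ?thesis using True by simp
next
  case False then show ?thesis by (auto intro!: sum.neutral)
qed

lemma part1:
  assumes sc: "\<forall>X\<in>Xs. is_subcube n X"
    and disj: "\<forall>X\<in>Xs. \<forall>Y\<in>Xs. X \<noteq> Y \<longrightarrow> X \<inter> Y = {}"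
    and un: "Uc n c \<union> Vc n c = \<Union>Xs"
    and ed: "Ec n c = (\<Union>X\<in>Xs. induced_edges n X)"
  shows "direct_sum_irred n (Uc n c) (rho_c n c) Xs"
proof -
  let ?U = "Uc n c"
  have fU: "finite ?U" by (rule Uc_fin)
  have finXs: "finite Xs"
  proof (rule finite_subset)
    show "Xs \<subseteq> Pow (Uc n c \<union> Vc n c)" unfolding un by auto
    show "finite (Pow (Uc n c \<union> Vc n c))" using Uc_fin Vc_fin by simp
  qed
  have same: "X = Y" if "X \<in> Xs" "Y \<in> Xs" "z \<in> X" "z \<in> Y" for X Y z
  proof (rule ccontr)
    assume "X \<noteq> Y" then have "X \<inter> Y = {}" using disj that(1,2) by blast
    then show False using that(3,4) by blast
  qed
  have edge_block: "\<exists>Y\<in>Xs. i \<in> Y \<and> j \<in> Y" if "(i,j) \<in> Ec n c" for i j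
  proof -
    have "(i,j) \<in> (\<Union>X\<in>Xs. induced_edges n X)" using that ed by simp
    then obtain Y where "Y \<in> Xs" "(i,j) \<in> induced_edges n Y" by blast
    then show ?thesis unfolding induced_edges_def by blast
  qed
  have cl: "closed_set n c X" if X: "X \<in> Xs" for X
    unfolding closed_set_def
  proof (intro allI impI)
    fix i j assume "(i,j) \<in> Ec n c"
    then obtain Y where Y: "Y \<in> Xs" "i \<in> Y" "j \<in> Y" using edge_block by blast
    show "i \<in> X \<longleftrightarrow> j \<in> X"
    proof
      assume "i \<in> X" then have "X = Y" using same[OF X Y(1)] Y by blast
      then show "j \<in> X" using Y by simp
    next
      assume "j \<in> X" then have "X = Y" using same[OF X Y(1)] Y by blast
      then show "i \<in> X" using Y by simp
    qed
  qed
  have cn: "conn_set n c X" if X: "X \<in> Xs" for X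
  proof -
    have "is_subcube n X" using sc X by blast
    then obtain K a where Ka: "K \<subseteq> {..<n}" "a < 2^n" "X = subcube_verts n K a"
      unfolding is_subcube_def by blast
    have "induced_edges n X \<subseteq> (\<Union>X\<in>Xs. induced_edges n X)" using X by blast
    then have "induced_edges n (subcube_verts n K a) \<subseteq> Ec n c" using ed Ka(3) by simp
    then have "conn_set n c (subcube_verts n K a)" by (rule subcube_conn[OF Ka(1,2)])
    then show ?thesis using Ka(3) by simp
  qed
  have ne: "X \<inter> ?U \<noteq> {}" if X: "X \<in> Xs" for X
  proof -
    have "is_subcube n X" using sc X by blast
    then obtain K a where Ka: "K \<subseteq> {..<n}" "a < 2^n" "X = subcube_verts n K a"
      unfolding is_subcube_def by blast
    then have aX: "a \<in> X" using subcube_a by simp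
    then have "a \<in> ?U \<union> Vc n c" unfolding un using X by blast
    then show ?thesis
    proof
      assume "a \<in> ?U" then show ?thesis using aX by blast
    next
      assume "a \<in> Vc n c"
      then obtain i where i: "(i,a) \<in> Ec n c" by (auto simp: Vc_iff)
      then have "i \<in> X" using cl[OF X] aX unfolding closed_set_def by blast
      then show ?thesis using i Ec_in_U by blast
    qed
  qed
  show ?thesis
    unfolding direct_sum_irred_def
  proof (intro exI[of _ "\<lambda>X. idm (X \<inter> ?U)"] conjI ballI impI)
    fix X assume "X \<in> Xs"
    show "is_proj ?U (idm (X \<inter> ?U))" using fU by (simp add: idm_proj)
  next
    fix X Y assume "X \<in> Xs" "Y \<in> Xs" "X \<noteq> Y"
    then have "X \<inter> Y = {}" using disj by simp
    then show "mm ?U (idm (X \<inter> ?U)) (idm (Y \<inter> ?U)) = (\<lambda>_ _. 0)"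
    proof -
      have "mm ?U (idm (X \<inter> ?U)) (idm (Y \<inter> ?U)) = (\<lambda>a b. if a \<in> X \<inter> ?U then idm (Y \<inter> ?U) a b else 0)"
        using fU by (simp add: mm_idm_l)
      then show ?thesis using \<open>X \<inter> Y = {}\<close> by (auto simp: idm_def fun_eq_iff)
    qed
  next
    show "(\<lambda>a b. \<Sum>X\<in>Xs. idm (X \<inter> ?U) a b) = idm ?U"
    proof (rule ext, rule ext)
      fix a b
      show "(\<Sum>X\<in>Xs. idm (X \<inter> ?U) a b) = idm ?U a b"
      proof (cases "a = b \<and> a \<in> ?U")
        case True
        then have "(\<Sum>X\<in>Xs. idm (X \<inter> ?U) a b) = (\<Sum>X\<in>Xs. (if a \<in> X then (1::complex) else 0))"
          by (auto simp: idm_def intro!: sum.cong)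
        also have "\<dots> = 1" using sum_blocks[OF finXs disj, of a] True unfolding un[symmetric] by auto
        finally have "(\<Sum>X\<in>Xs. idm (X \<inter> ?U) a b) = 1" .
        moreover have "idm ?U a b = 1" using True by (auto simp: idm_def)
        ultimately show ?thesis by simp
      next
        case False then show ?thesis by (auto simp: idm_def intro!: sum.neutral)
      qed
    qed
  next
    fix X x assume "X \<in> Xs" "x \<in> verts n"
    then show "mm ?U (idm (X \<inter> ?U)) (rho_c n c x) = mm ?U (rho_c n c x) (idm (X \<inter> ?U))"
      using comm_closed[OF cl] by simp
  next
    fix X assume "X \<in> Xs"
    then show "irreducible_on n ?U (idm (X \<inter> ?U)) (rho_c n c)"
      using irred_closed[OF cl cn ne] by simp
  next
    fix X x assume "X \<in> Xs" "x \<in> verts n" "x \<notin> X"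
    then show "mm ?U (rho_c n c x) (idm (X \<inter> ?U)) = (\<lambda>_ _. 0)"
      using zero_closed[OF cl] by simp
  qed
qed

definition ecn :: "nat \<Rightarrow> (nat \<Rightarrow> nat \<Rightarrow> complex) \<Rightarrow> nat \<Rightarrow> nat \<Rightarrow> bool" where
  "ecn n c x y \<longleftrightarrow> (x,y) \<in> Ec n c \<or> (y,x) \<in> Ec n c"

lemma ecn_sym: "ecn n c x y \<Longrightarrow> ecn n c y x" by (auto simp: ecn_def)

lemma flip_comm: "flip_bit k (flip_bit l (x::nat)) = flip_bit l (flip_bit k x)"
  by (rule bit_eqI) (auto simp: bit_flip_bit_iff)

lemma flip_inj: "flip_bit k (x::nat) = flip_bit l x \<Longrightarrow> k = l"
proof (rule ccontr)
  assume "flip_bit k x = flip_bit l x" "k \<noteq> l"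
  then have "bit (flip_bit k x) k = bit (flip_bit l x) k" by simp
  then show False using \<open>k \<noteq> l\<close> by (simp add: bit_flip_bit_iff)
qed

lemma sum_two: "x \<noteq> y \<Longrightarrow> (\<Sum>i\<in>{x,y}. f i) = f x + (f y :: complex)" by simp

lemma square:
  assumes adm: "admissible n c" and x: "x < 2^n" and kl: "k < n" "l < n" "k \<noteq> l"
    and e1: "ecn n c x (flip_bit k x)" and e2: "ecn n c x (flip_bit l x)"
  shows "ecn n c (flip_bit l x) (flip_bit k (flip_bit l x))"
proof -
  let ?y = "flip_bit k (flip_bit l x)"
  have inter: "nbrs n (flip_bit k x) \<inter> nbrs n (flip_bit l x) = {x, ?y}" by (rule nbrs_inter[OF x kl])
  have xy: "x \<noteq> ?y" using flip2_neq[OF kl(3)] by metis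
  have kl': "flip_bit k x \<noteq> flip_bit l x" using flip_inj kl(3) by blast
  have "x \<in> Uv n \<or> x \<in> Vv n" using x by (auto simp: Uv_def Vv_def)
  then show ?thesis
  proof
    assume xU: "x \<in> Uv n"
    have j1V: "flip_bit k x \<in> Vv n" "flip_bit l x \<in> Vv n" using flip_U xU kl by auto
    have "(x, flip_bit k x) \<in> Ec n c" using e1 j1V(1) xU UV_disj Ec_Ed Ed_UV unfolding ecn_def by blast
    then have c1: "c x (flip_bit k x) \<noteq> 0" and j1: "flip_bit k x \<in> Vc n c"
      using Ec_Ed Ec_in_V by blast+
    have "(x, flip_bit l x) \<in> Ec n c" using e2 j1V(2) xU UV_disj Ec_Ed Ed_UV unfolding ecn_def by blast
    then have c2: "c x (flip_bit l x) \<noteq> 0" and j2: "flip_bit l x \<in> Vc n c"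
      using Ec_Ed Ec_in_V by blast+
    have "(\<Sum>i\<in>nbrs n (flip_bit k x) \<inter> nbrs n (flip_bit l x). c i (flip_bit k x) * cnj (c i (flip_bit l x))) = 0"
      using adm j1 j2 kl' unfolding admissible_def by simp
    then have "c x (flip_bit k x) * cnj (c x (flip_bit l x)) + c ?y (flip_bit k x) * cnj (c ?y (flip_bit l x)) = 0"
      unfolding inter using sum_two[OF xy] by simp
    then have "c ?y (flip_bit l x) \<noteq> 0" using c1 c2 by auto
    moreover have "(?y, flip_bit l x) \<in> Ed n"
    proof -
      have "?y \<in> Uv n" using flip_V[OF j1V(2) kl(1)] .
      moreover have "flip_bit l x = flip_bit k ?y" by simp
      ultimately show ?thesis using j1V kl unfolding Ed_def by blast
    qed
    ultimately show ?thesis unfolding ecn_def Ec_def by blast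
  next
    assume xV: "x \<in> Vv n"
    have iU: "flip_bit k x \<in> Uv n" "flip_bit l x \<in> Uv n" using flip_V xV kl by auto
    have "(flip_bit k x, x) \<in> Ec n c" using e1 iU(1) xV UV_disj Ec_Ed Ed_UV unfolding ecn_def by blast
    then have c1: "c (flip_bit k x) x \<noteq> 0" and i1: "flip_bit k x \<in> Uc n c"
      using Ec_Ed Ec_in_U by blast+
    have "(flip_bit l x, x) \<in> Ec n c" using e2 iU(2) xV UV_disj Ec_Ed Ed_UV unfolding ecn_def by blast
    then have c2: "c (flip_bit l x) x \<noteq> 0" and i2: "flip_bit l x \<in> Uc n c"
      using Ec_Ed Ec_in_U by blast+
    have "(\<Sum>j\<in>nbrs n (flip_bit k x) \<inter> nbrs n (flip_bit l x). c (flip_bit k x) j * cnj (c (flip_bit l x) j)) = 0"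
      using adm i1 i2 kl' unfolding admissible_def by simp
    then have "c (flip_bit k x) x * cnj (c (flip_bit l x) x) + c (flip_bit k x) ?y * cnj (c (flip_bit l x) ?y) = 0"
      unfolding inter using sum_two[OF xy] by simp
    then have "c (flip_bit l x) ?y \<noteq> 0" using c1 c2 by auto
    moreover have "(flip_bit l x, ?y) \<in> Ed n"
    proof -
      have "?y \<in> Vv n" using flip_U[OF iU(2) kl(1)] .
      then show ?thesis using iU kl unfolding Ed_def by blast
    qed
    ultimately show ?thesis unfolding ecn_def Ec_def by blast
  qed
qed

definition Dset :: "nat \<Rightarrow> (nat \<Rightarrow> nat \<Rightarrow> complex) \<Rightarrow> nat \<Rightarrow> nat set" where
  "Dset n c x = {k. k < n \<and> ecn n c x (flip_bit k x)}"

lemma D_sub: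
  assumes adm: "admissible n c" and x: "x < 2^n" and l: "l \<in> Dset n c x"
  shows "Dset n c x \<subseteq> Dset n c (flip_bit l x)"
proof
  fix k assume k: "k \<in> Dset n c x"
  have ln: "l < n" and el: "ecn n c x (flip_bit l x)" using l by (auto simp: Dset_def)
  have kn: "k < n" and ek: "ecn n c x (flip_bit k x)" using k by (auto simp: Dset_def)
  show "k \<in> Dset n c (flip_bit l x)"
  proof (cases "k = l")
    case True
    then show ?thesis using kn ecn_sym[OF el] by (simp add: Dset_def)
  next
    case False
    then show ?thesis using square[OF adm x kn ln False ek el] kn by (simp add: Dset_def)
  qed
qed

lemma D_eq:
  assumes adm: "admissible n c" and x: "x < 2^n" and l: "l \<in> Dset n c x"
  shows "Dset n c (flip_bit l x) = Dset n c x"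
proof
  show "Dset n c x \<subseteq> Dset n c (flip_bit l x)" by (rule D_sub[OF assms])
  have ln: "l < n" and el: "ecn n c x (flip_bit l x)" using l by (auto simp: Dset_def)
  have x': "flip_bit l x < 2^n" using flip_lt[OF x ln] .
  have "l \<in> Dset n c (flip_bit l x)" using ln ecn_sym[OF el] by (simp add: Dset_def)
  from D_sub[OF adm x' this] show "Dset n c (flip_bit l x) \<subseteq> Dset n c x" by simp
qed

lemma Ed_flip: "(i,j) \<in> Ed n \<Longrightarrow> i < 2^n \<and> (\<exists>k<n. j = flip_bit k i)"
  by (auto simp: Ed_def Uv_def)

lemma irr_imp:
  assumes adm: "admissible n c" and irr: "irreducible n (Uc n c) (rho_c n c)"
  shows "\<exists>X. is_subcube n X \<and> Uc n c \<union> Vc n c = X \<and> Ec n c = induced_edges n X"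
proof -
  let ?U = "Uc n c"
  have fU: "finite ?U" by (rule Uc_fin)
  have irr': "idm ?U \<noteq> (\<lambda>_ _. 0)"
    and irrQ: "\<And>Q. is_proj ?U Q \<and> mm ?U Q (idm ?U) = Q \<and> (\<forall>x\<in>verts n. mm ?U Q (rho_c n c x) = mm ?U (rho_c n c x) Q)
          \<Longrightarrow> Q = (\<lambda>_ _. 0) \<or> Q = idm ?U"
    using irr unfolding irreducible_def irreducible_on_def by (blast, blast)
  have "?U \<noteq> {}"
  proof
    assume "?U = {}" then have "idm ?U = (\<lambda>_ _. 0)" by (simp add: idm_def fun_eq_iff)
    then show False using irr' by simp
  qed
  then obtain a where aU: "a \<in> ?U" by blast
  have an: "a < 2^n" using Uc_Uv[OF aU] by (simp add: Uv_def)
  define K where "K = Dset n c a"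
  define X where "X = subcube_verts n K a"
  have Kn: "K \<subseteq> {..<n}" by (auto simp: K_def Dset_def)
  have DX: "Dset n c x = K" if "x \<in> X" for x
  proof (rule subcube_induct[OF an Kn, where P = "\<lambda>x. Dset n c x = K"])
    show "Dset n c a = K" by (simp add: K_def)
    show "x \<in> subcube_verts n K a" using that by (simp add: X_def)
  next
    fix y k assume y: "y \<in> subcube_verts n K a" and k: "k \<in> K" and D: "Dset n c y = K"
    have "y < 2^n" using y by (simp add: subcube_verts_def)
    moreover have "k \<in> Dset n c y" using k D by simp
    ultimately have "Dset n c (flip_bit k y) = Dset n c y" by (rule D_eq[OF adm])
    then show "Dset n c (flip_bit k y) = K" using D by simp
  qed
  have Xlt: "x < 2^n" if "x \<in> X" for x using that by (simp add: X_def subcube_verts_def)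
  have flipX: "flip_bit k x \<in> X" if "x \<in> X" "k \<in> K" for x k
    using subcube_flip[of x n K a k] that Kn by (auto simp: X_def)
  have cl: "closed_set n c X"
    unfolding closed_set_def
  proof (intro allI impI)
    fix i j assume e: "(i,j) \<in> Ec n c"
    then have "(i,j) \<in> Ed n" by (simp add: Ec_def)
    then have "i < 2^n \<and> (\<exists>k<n. j = flip_bit k i)" by (rule Ed_flip)
    then obtain k where k: "k < n" "j = flip_bit k i" and il: "i < 2^n" by blast
    have ec: "ecn n c i j" using e by (simp add: ecn_def)
    show "i \<in> X \<longleftrightarrow> j \<in> X"
    proof
      assume iX: "i \<in> X"
      have "k \<in> Dset n c i" using ec k by (simp add: Dset_def)
      then have "flip_bit k i \<in> X" using DX[OF iX] flipX[OF iX] by simp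
      then show "j \<in> X" using k(2) by simp
    next
      assume jX: "j \<in> X"
      have ij: "i = flip_bit k j" using k(2) by simp
      have "ecn n c j (flip_bit k j)" using ecn_sym[OF ec] ij by simp
      then have "k \<in> Dset n c j" using k(1) by (simp add: Dset_def)
      then have "flip_bit k j \<in> X" using DX[OF jX] flipX[OF jX] by simp
      then show "i \<in> X" using ij by simp
    qed
  qed
  have aX: "a \<in> X" using subcube_a[OF an] by (simp add: X_def)
  have "idm (X \<inter> ?U) = (\<lambda>_ _. 0) \<or> idm (X \<inter> ?U) = idm ?U"
  proof (rule irrQ, intro conjI ballI)
    show "is_proj ?U (idm (X \<inter> ?U))" using fU by (simp add: idm_proj)
    show "mm ?U (idm (X \<inter> ?U)) (idm ?U) = idm (X \<inter> ?U)"
      using fU by (subst mm_idm_r) (auto simp: idm_def fun_eq_iff)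
    fix x assume "x \<in> verts n"
    show "mm ?U (idm (X \<inter> ?U)) (rho_c n c x) = mm ?U (rho_c n c x) (idm (X \<inter> ?U))"
      by (rule comm_closed[OF cl])
  qed
  moreover have "idm (X \<inter> ?U) a a = 1" using aX aU by (simp add: idm_def)
  ultimately have QI: "idm (X \<inter> ?U) = idm ?U" by auto
  have UX: "?U \<subseteq> X"
  proof
    fix u assume "u \<in> ?U"
    then have "idm ?U u u = 1" by (simp add: idm_def)
    then have "idm (X \<inter> ?U) u u = 1" using QI by simp
    then show "u \<in> X" by (simp add: idm_def split: if_splits)
  qed
  have VX: "Vc n c \<subseteq> X"
  proof
    fix j assume "j \<in> Vc n c"
    then obtain i where e: "(i,j) \<in> Ec n c" by (auto simp: Vc_iff)
    then have "i \<in> X" using UX Ec_in_U[OF e] by blast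
    then show "j \<in> X" using cl e unfolding closed_set_def by blast
  qed
  obtain j where aj: "(a,j) \<in> Ec n c" using aU by (auto simp: Uc_iff)
  then have "(a,j) \<in> Ed n" by (simp add: Ec_def)
  then have "a < 2^n \<and> (\<exists>k<n. j = flip_bit k a)" by (rule Ed_flip)
  then obtain k0 where k0: "k0 < n" "j = flip_bit k0 a" by blast
  have k0K: "k0 \<in> K" using aj k0 by (auto simp: K_def Dset_def ecn_def)
  have XUV: "X \<subseteq> ?U \<union> Vc n c"
  proof
    fix x assume xX: "x \<in> X"
    then have "k0 \<in> Dset n c x" using DX k0K by simp
    then have "ecn n c x (flip_bit k0 x)" by (simp add: Dset_def)
    then show "x \<in> ?U \<union> Vc n c" unfolding ecn_def using Ec_in_U[of x] Ec_in_V[of _ x] by blast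
  qed
  have EX: "Ec n c = induced_edges n X"
  proof
    show "Ec n c \<subseteq> induced_edges n X"
    proof
      fix e assume e: "e \<in> Ec n c"
      obtain i j where ij: "e = (i,j)" by fastforce
      have eij: "(i,j) \<in> Ec n c" using e ij by simp
      have "(i,j) \<in> Ed n" using eij by (simp add: Ec_def)
      moreover have "i \<in> X" using Ec_in_U[OF eij] UX by blast
      moreover have "j \<in> X" using Ec_in_V[OF eij] VX by blast
      ultimately show "e \<in> induced_edges n X" using ij by (simp add: induced_edges_def)
    qed
  next
    show "induced_edges n X \<subseteq> Ec n c"
    proof
      fix e assume e: "e \<in> induced_edges n X"
      obtain i j where ij: "e = (i,j)" by fastforce
      have ed: "(i,j) \<in> Ed n" and iX: "i \<in> X" and jX: "j \<in> X" using e ij by (auto simp: induced_edges_def)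
      have "i < 2^n \<and> (\<exists>k<n. j = flip_bit k i)" using ed by (rule Ed_flip)
      then obtain k where k: "k < n" "j = flip_bit k i" by blast
      have "k \<in> K" using subcube_flip_in[of i n K a k] iX jX k by (simp add: X_def)
      then have "k \<in> Dset n c i" using DX[OF iX] by simp
      then have "ecn n c i j" using k by (simp add: Dset_def)
      moreover have "(j,i) \<notin> Ed n" using Ed_UV[OF ed] Ed_UV[of j i n] UV_disj by blast
      ultimately have "(i,j) \<in> Ec n c" unfolding ecn_def Ec_def by blast
      then show "e \<in> Ec n c" using ij by simp
    qed
  qed
  have "is_subcube n X" unfolding is_subcube_def X_def using Kn an by blast
  moreover have "?U \<union> Vc n c = X" using UX VX XUV by blast
  ultimately show ?thesis using EX by blast
qed

lemma irr_iff:
  assumes adm: "admissible n c"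
  shows "irreducible n (Uc n c) (rho_c n c) \<longleftrightarrow>
         (\<exists>X. is_subcube n X \<and> Uc n c \<union> Vc n c = X \<and> Ec n c = induced_edges n X)"
proof
  assume "irreducible n (Uc n c) (rho_c n c)"
  then show "\<exists>X. is_subcube n X \<and> Uc n c \<union> Vc n c = X \<and> Ec n c = induced_edges n X"
    by (rule irr_imp[OF adm])
next
  assume "\<exists>X. is_subcube n X \<and> Uc n c \<union> Vc n c = X \<and> Ec n c = induced_edges n X"
  then obtain X where X: "is_subcube n X" "Uc n c \<union> Vc n c = X" "Ec n c = induced_edges n X" by blast
  have "direct_sum_irred n (Uc n c) (rho_c n c) {X}"
  proof (rule part1)
    show "\<forall>X\<in>{X}. is_subcube n X" using X(1) by simp
    show "\<forall>Xa\<in>{X}. \<forall>Y\<in>{X}. Xa \<noteq> Y \<longrightarrow> Xa \<inter> Y = {}" by simp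
    show "Uc n c \<union> Vc n c = \<Union>{X}" using X(2) by simp
    show "Ec n c = (\<Union>X\<in>{X}. induced_edges n X)" using X(3) by simp
  qed
  then obtain P where P: "(\<lambda>a b. \<Sum>Y\<in>{X}. P Y a b) = idm (Uc n c)" "\<forall>Y\<in>{X}. irreducible_on n (Uc n c) (P Y) (rho_c n c)"
    unfolding direct_sum_irred_def by (elim exE conjE) (rule that; assumption)
  from P(1) have "P X = idm (Uc n c)" by (simp add: fun_eq_iff)
  moreover have "irreducible_on n (Uc n c) (P X) (rho_c n c)" using P(2) by simp
  ultimately show "irreducible n (Uc n c) (rho_c n c)" by (simp add: irreducible_def)
qed

lemma cnj_if: "cnj (if P then u else 0) = (if P then cnj u else 0)" by simp

lemma conj_idm1:
  assumes fin: "finite I" and u: "u \<in> I"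
  shows "mm I (mm I U (idm {u})) (adj U) = (\<lambda>a b. U a u * cnj (U b u))"
proof -
  have "mm I U (idm {u}) = (\<lambda>a b. if b \<in> {u} then U a b else 0)"
    using fin u by (simp add: mm_idm_r)
  then show ?thesis
    unfolding mm_def adj_def using fin u
    by (simp add: fun_eq_iff ifm1 sum.delta cong: if_cong)
qed

definition dg :: "'a set \<Rightarrow> ('a \<Rightarrow> complex) \<Rightarrow> 'a \<Rightarrow> 'a \<Rightarrow> complex" where
  "dg I m = (\<lambda>a b. if a = b \<and> a \<in> I then m a else 0)"

lemma conj_dg:
  assumes fin: "finite I"
  shows "mm I (mm I (dg I m) R) (adj (dg I m)) = (\<lambda>a b. if a \<in> I \<and> b \<in> I then m a * R a b * cnj (m b) else 0)"
proof -
  have 1: "mm I (dg I m) R = (\<lambda>a b. if a \<in> I then m a * R a b else 0)"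
    unfolding mm_def dg_def using fin by (simp add: fun_eq_iff ifm1 sum.delta cong: if_cong)
  show ?thesis unfolding 1 unfolding mm_def dg_def adj_def using fin
    by (auto simp: fun_eq_iff ifm1 ifm2 cnj_if sum.delta' cong: if_cong)
qed

lemma dg_unitary:
  assumes fin: "finite I" and m: "\<forall>a\<in>I. cmod (m a) = 1"
  shows "mm I (dg I m) (adj (dg I m)) = idm I"
proof -
  have "m a * cnj (m a) = 1" if "a \<in> I" for a
    using m that by (metis complex_norm_square of_real_1 power_one)
  then show ?thesis
    unfolding mm_def dg_def adj_def idm_def using fin
    by (auto simp: fun_eq_iff ifm1 ifm2 cnj_if sum.delta' cong: if_cong; auto intro!: sum.neutral)
qed

lemma dg_unitary2:
  assumes fin: "finite I" and m: "\<forall>a\<in>I. cmod (m a) = 1"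
  shows "mm I (adj (dg I m)) (dg I m) = idm I"
proof -
  have "cnj (m a) * m a = 1" if "a \<in> I" for a
    using m that by (metis complex_norm_square of_real_1 power_one mult.commute)
  then show ?thesis
    unfolding mm_def dg_def adj_def idm_def using fin
    by (auto simp: fun_eq_iff ifm1 ifm2 cnj_if sum.delta' cong: if_cong; auto intro!: sum.neutral)
qed

lemma rho_nz_in: "rho_c n c x \<noteq> (\<lambda>_ _. 0) \<Longrightarrow> x \<in> Uc n c \<or> x \<in> Vc n c"
  using rho_c_0 by blast

lemma cnj_sq_nz: "(z::complex) \<noteq> 0 \<Longrightarrow> z * cnj z \<noteq> 0" by simp

lemma alg1:
  fixes A B C Dd m m0 :: complex
  assumes h: "A * cnj B = m * C * cnj Dd * cnj m0" and bb: "B * cnj B = Dd * cnj Dd"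
    and D0: "Dd \<noteq> 0" and m0: "m0 * cnj m0 = 1"
  shows "A = m * (B / (m0 * Dd)) * C"
proof -
  have B0: "B \<noteq> 0" using bb D0 by auto
  have m00: "m0 \<noteq> 0" using m0 by auto
  have "A * cnj B * (m0 * Dd) = m * C * cnj m0 * m0 * (Dd * cnj Dd)" using h by (simp add: algebra_simps)
  also have "\<dots> = m * C * (B * cnj B)" using m0 bb by (simp add: algebra_simps)
  finally have "A * cnj B * (m0 * Dd) = m * C * B * cnj B" by (simp add: algebra_simps)
  then have "A * (m0 * Dd) = m * C * B" using B0 by (simp add: algebra_simps)
  then show ?thesis using m00 D0 by (simp add: field_simps)
qed

lemma norm1_iff: "cmod z = 1 \<longleftrightarrow> z * cnj z = 1"
proof -
  have "z * cnj z = complex_of_real ((cmod z)^2)" by (rule complex_norm_square[symmetric])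
  moreover have "(cmod z)^2 = 1 \<longleftrightarrow> cmod z = 1"
    using power2_eq_iff_nonneg[of "cmod z" 1] by simp
  moreover have "complex_of_real ((cmod z)^2) = 1 \<longleftrightarrow> (cmod z)^2 = 1"
    by (rule of_real_eq_1_iff)
  ultimately show ?thesis by simp
qed

lemma norm_eq_iff_sq: "cmod z = cmod w \<longleftrightarrow> z * cnj z = w * cnj w"
proof -
  have "z * cnj z = complex_of_real ((cmod z)^2)" "w * cnj w = complex_of_real ((cmod w)^2)"
    by (rule complex_norm_square[symmetric])+
  moreover have "(cmod z)^2 = (cmod w)^2 \<longleftrightarrow> cmod z = cmod w"
    using power2_eq_iff_nonneg[of "cmod z" "cmod w"] by simp
  moreover have "complex_of_real ((cmod z)^2) = complex_of_real ((cmod w)^2) \<longleftrightarrow> (cmod z)^2 = (cmod w)^2"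
    by (rule of_real_eq_iff)
  ultimately show ?thesis by simp
qed

lemma rho_c_Vv: "j \<in> Vv n \<Longrightarrow> rho_c n c j = (\<lambda>a b. ce n c a j * cnj (ce n c b j))"
proof -
  assume j: "j \<in> Vv n"
  then have "j \<notin> Uc n c" using Uc_Uv UV_disj by blast
  show ?thesis
  proof (cases "j \<in> Vc n c")
    case True then show ?thesis by (simp add: rho_c_V)
  next
    case False then show ?thesis using \<open>j \<notin> Uc n c\<close> by (simp add: rho_c_0 ce_V fun_eq_iff)
  qed
qed

lemma Vv_verts: "j \<in> Vv n \<Longrightarrow> j \<in> verts n" by (simp add: verts_def)
lemma Uv_verts: "j \<in> Uv n \<Longrightarrow> j \<in> verts n" by (simp add: verts_def)

lemma ue_fwd:
  assumes ue: "unit_equiv n (Uc n c) (rho_c n c) (Uc n d) (rho_c n d)"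
  shows "Uc n d = Uc n c \<and> Vc n d = Vc n c \<and> Ec n d = Ec n c \<and>
           (\<exists>lam :: nat \<Rightarrow> complex. (\<forall>x\<in>Uc n c \<union> Vc n c. cmod (lam x) = 1) \<and>
              (\<forall>(i, j)\<in>Ec n c. d i j = lam i * lam j * c i j))"
proof -
  let ?I = "Uc n c" and ?J = "Uc n d"
  have fI: "finite ?I" and fJ: "finite ?J" by (rule Uc_fin)+
  obtain U where mo: "mat_on ?J ?I U" and uu: "mm ?I U (adj U) = idm ?J" and uu2: "mm ?J (adj U) U = idm ?I"
    and cj: "\<forall>x\<in>verts n. mm ?I (mm ?I U (rho_c n c x)) (adj U) = rho_c n d x"
    using ue unfolding unit_equiv_def by blast
  have col: "rho_c n d u = (\<lambda>a b. U a u * cnj (U b u))" if u: "u \<in> ?I" for u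
  proof -
    have "rho_c n d u = mm ?I (mm ?I U (rho_c n c u)) (adj U)" using cj Uc_verts[OF u] by simp
    also have "\<dots> = (\<lambda>a b. U a u * cnj (U b u))" using u fI by (simp add: rho_c_U conj_idm1)
    finally show ?thesis .
  qed
  have IJ: "?I \<subseteq> ?J"
  proof
    fix u assume u: "u \<in> ?I"
    have "mm ?J (adj U) U u u = 1" using uu2 u by (simp add: idm_def)
    then have "(\<Sum>k\<in>?J. cnj (U k u) * U k u) = 1" by (simp add: mm_def adj_def)
    then have "\<exists>k\<in>?J. cnj (U k u) * U k u \<noteq> 0"
    proof -
      assume s1: "(\<Sum>k\<in>?J. cnj (U k u) * U k u) = 1"
      show ?thesis
      proof (rule ccontr)
        assume "\<not> (\<exists>k\<in>?J. cnj (U k u) * U k u \<noteq> 0)"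
        then have "(\<Sum>k\<in>?J. cnj (U k u) * U k u) = 0" by (intro sum.neutral) blast
        then show False using s1 by simp
      qed
    qed
    then obtain k where k: "k \<in> ?J" "cnj (U k u) * U k u \<noteq> 0" by blast
    have "rho_c n d u k k \<noteq> 0" using col[OF u] k by (simp add: mult.commute)
    then have "rho_c n d u \<noteq> (\<lambda>_ _. 0)" by auto
    then have "u \<in> Uc n d \<or> u \<in> Vc n d" by (rule rho_nz_in)
    moreover have "u \<notin> Vc n d" using Uc_Uv[OF u] Vc_Vv UV_disj by blast
    ultimately show "u \<in> ?J" by blast
  qed
  have JI: "?J \<subseteq> ?I"
  proof
    fix u assume u: "u \<in> ?J"
    show "u \<in> ?I"
    proof (rule ccontr)
      assume nu: "u \<notin> ?I"
      have "u \<notin> Vc n c" using Uc_Uv[OF u] Vc_Vv UV_disj by blast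
      then have "rho_c n c u = (\<lambda>_ _. 0)" using nu by (simp add: rho_c_0)
      moreover have "mm ?I (mm ?I U (rho_c n c u)) (adj U) = rho_c n d u" using cj Uc_verts[OF u] by blast
      ultimately have "rho_c n d u = mm ?I (mm ?I U (\<lambda>_ _. 0)) (adj U)" by simp
      then have "rho_c n d u u u = 0" by (simp add: mm_def)
      then show False using u by (simp add: rho_c_U idm_def)
    qed
  qed
  have JeqI: "?J = ?I" using IJ JI by blast
  define mu where "mu a = U a a" for a
  have ent: "U a u * cnj (U b u) = idm {u} a b" if "u \<in> ?I" for u a b
  proof -
    have "rho_c n d u = idm {u}" using that JeqI by (simp add: rho_c_U)
    then show ?thesis using col[OF that] by (simp add: fun_eq_iff)
  qed
  have mu1: "mu u * cnj (mu u) = 1" if "u \<in> ?I" for u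
    using ent[OF that, of u u] by (simp add: mu_def idm_def)
  have Udg: "U = dg ?I mu"
  proof (rule ext, rule ext)
    fix a b
    show "U a b = dg ?I mu a b"
    proof (cases "b \<in> ?I")
      case False then show ?thesis using mo by (auto simp: mat_on_def dg_def mu_def)
    next
      case True
      show ?thesis
      proof (cases "a = b")
        case True then show ?thesis using \<open>b \<in> ?I\<close> by (simp add: dg_def mu_def)
      next
        case False
        then have "U a b * cnj (U a b) = 0" using ent[OF \<open>b \<in> ?I\<close>, of a a] by (simp add: idm_def)
        then show ?thesis using False by (simp add: dg_def)
      qed
    qed
  qed
  have mun: "\<forall>a\<in>?I. cmod (mu a) = 1" using mu1 norm1_iff by blast
  have cj2: "rho_c n d x = (\<lambda>a b. if a \<in> ?I \<and> b \<in> ?I then mu a * rho_c n c x a b * cnj (mu b) else 0)"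
    if "x \<in> verts n" for x
    using cj that fI unfolding Udg by (simp add: conj_dg)
  have K1: "ce n d a j * cnj (ce n d b j) = mu a * (ce n c a j * cnj (ce n c b j)) * cnj (mu b)"
    if j: "j \<in> Vv n" and a: "a \<in> ?I" and b: "b \<in> ?I" for j a b
  proof -
    have "rho_c n d j a b = mu a * rho_c n c j a b * cnj (mu b)"
      using cj2[OF Vv_verts[OF j]] a b by simp
    then show ?thesis using j by (simp add: rho_c_Vv)
  qed
  have K2: "ce n d a j * cnj (ce n d a j) = ce n c a j * cnj (ce n c a j)" if j: "j \<in> Vv n" for j a
  proof (cases "a \<in> ?I")
    case True
    have "ce n d a j * cnj (ce n d a j) = mu a * cnj (mu a) * (ce n c a j * cnj (ce n c a j))"
      using K1[OF j True True] by (simp add: algebra_simps)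
    then show ?thesis using mu1[OF True] by simp
  next
    case False
    then show ?thesis using JeqI by (simp add: ce_U)
  qed
  have EE: "Ec n d = Ec n c"
  proof (rule set_eqI)
    fix e :: "nat \<times> nat"
    obtain a j where e: "e = (a,j)" by fastforce
    show "e \<in> Ec n d \<longleftrightarrow> e \<in> Ec n c"
    proof (cases "j \<in> Vv n")
      case True
      have "ce n d a j \<noteq> 0 \<longleftrightarrow> ce n c a j \<noteq> 0" using K2[OF True, of a] by auto
      then show ?thesis using e by (simp add: ce_nz)
    next
      case False
      then show ?thesis using e Ec_Ed Ed_UV by blast
    qed
  qed
  have VV: "Vc n d = Vc n c" unfolding Vc_def using EE by simp
  define i0 where "i0 j = (SOME i. (i,j) \<in> Ec n c)" for j
  define lam where "lam x = (if x \<in> Vv n then ce n d (i0 x) x / (mu (i0 x) * ce n c (i0 x) x) else mu x)" for x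
  have i0: "(i0 j, j) \<in> Ec n c" if jv: "j \<in> Vc n c" for j
  proof -
    obtain i where "(i,j) \<in> Ec n c" using jv by (auto simp: Vc_iff)
    then show ?thesis unfolding i0_def by (rule someI)
  qed
  have lamn: "\<forall>x\<in>?I \<union> Vc n c. cmod (lam x) = 1"
  proof
    fix x assume x: "x \<in> ?I \<union> Vc n c"
    show "cmod (lam x) = 1"
    proof (cases "x \<in> Vc n c")
      case True
      have xV: "x \<in> Vv n" using Vc_Vv[OF True] .
      have e: "(i0 x, x) \<in> Ec n c" using i0[OF True] .
      have iI: "i0 x \<in> ?I" using Ec_in_U[OF e] .
      have nz: "ce n c (i0 x) x \<noteq> 0" using e by (simp add: ce_nz)
      have "cmod (ce n d (i0 x) x) = cmod (ce n c (i0 x) x)" using K2[OF xV] norm_eq_iff_sq by blast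
      moreover have "cmod (mu (i0 x)) = 1" using mun iI by blast
      ultimately show ?thesis using xV nz by (simp add: lam_def norm_divide norm_mult)
    next
      case False
      then have "x \<in> ?I" using x by blast
      moreover have "x \<notin> Vv n" using Uc_Uv[OF \<open>x \<in> ?I\<close>] UV_disj by blast
      ultimately show ?thesis using mun by (simp add: lam_def)
    qed
  qed
  have lamc: "\<forall>(i, j)\<in>Ec n c. d i j = lam i * lam j * c i j"
  proof (intro ballI, clarify)
    fix i j assume e: "(i,j) \<in> Ec n c"
    have jV: "j \<in> Vv n" and iU: "i \<in> Uv n" and ed: "(i,j) \<in> Ed n" using Ec_Ed[OF e] Ed_UV by blast+
    have jVc: "j \<in> Vc n c" using Ec_in_V[OF e] .
    have e0: "(i0 j, j) \<in> Ec n c" using i0[OF jVc] .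
    have iI: "i \<in> ?I" using Ec_in_U[OF e] .
    have i0I: "i0 j \<in> ?I" using Ec_in_U[OF e0] .
    have h: "ce n d i j * cnj (ce n d (i0 j) j) = mu i * ce n c i j * cnj (ce n c (i0 j) j) * cnj (mu (i0 j))"
      using K1[OF jV iI i0I] by (simp add: algebra_simps)
    have "ce n d i j = mu i * (ce n d (i0 j) j / (mu (i0 j) * ce n c (i0 j) j)) * ce n c i j"
    proof (rule alg1[OF h K2[OF jV]])
      show "ce n c (i0 j) j \<noteq> 0" using e0 by (simp add: ce_nz)
      show "mu (i0 j) * cnj (mu (i0 j)) = 1" using mu1[OF i0I] .
    qed
    moreover have "lam i = mu i" using iU UV_disj by (simp add: lam_def)
    moreover have "lam j = ce n d (i0 j) j / (mu (i0 j) * ce n c (i0 j) j)" using jV by (simp add: lam_def)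
    moreover have "ce n d i j = d i j" "ce n c i j = c i j" using ed by (simp_all add: ce_def)
    ultimately show "d i j = lam i * lam j * c i j" by simp
  qed
  show ?thesis using JeqI VV EE lamn lamc by blast
qed

lemma ue_bwd:
  assumes UU: "Uc n d = Uc n c" and VV: "Vc n d = Vc n c" and EE: "Ec n d = Ec n c"
    and lamn: "\<forall>x\<in>Uc n c \<union> Vc n c. cmod (lam x) = 1"
    and lamc: "\<forall>(i, j)\<in>Ec n c. d i j = lam i * lam j * c i j"
  shows "unit_equiv n (Uc n c) (rho_c n c) (Uc n d) (rho_c n d)"
proof -
  let ?I = "Uc n c"
  have fI: "finite ?I" by (rule Uc_fin)
  have lamI: "\<forall>a\<in>?I. cmod (lam a) = 1" using lamn by blast
  have l1: "lam a * cnj (lam a) = 1" if "a \<in> ?I \<union> Vc n c" for a using lamn that norm1_iff by blast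
  have cd: "ce n d a x = (if a \<in> ?I then lam a * lam x * ce n c a x else 0)" for a x
  proof (cases "a \<in> ?I")
    case False then show ?thesis using UU by (simp add: ce_U)
  next
    case True
    show ?thesis
    proof (cases "(a,x) \<in> Ec n c")
      case True
      then have "d a x = lam a * lam x * c a x" using lamc by blast
      moreover have "(a,x) \<in> Ed n" using True Ec_Ed by blast
      ultimately show ?thesis using \<open>a \<in> ?I\<close> by (simp add: ce_def)
    next
      case False
      then have "ce n c a x = 0" "ce n d a x = 0" using EE ce_nz[of n c a x] ce_nz[of n d a x] by auto
      then show ?thesis by simp
    qed
  qed
  show ?thesis
    unfolding unit_equiv_def
  proof (intro exI[of _ "dg ?I lam"] conjI ballI)
    show "mat_on (Uc n d) ?I (dg ?I lam)" using UU by (simp add: mat_on_def dg_def)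
    show "mm ?I (dg ?I lam) (adj (dg ?I lam)) = idm (Uc n d)" using UU dg_unitary[OF fI lamI] by simp
    show "mm (Uc n d) (adj (dg ?I lam)) (dg ?I lam) = idm ?I" using UU dg_unitary2[OF fI lamI] by simp
    fix x assume x: "x \<in> verts n"
    have cj: "mm ?I (mm ?I (dg ?I lam) (rho_c n c x)) (adj (dg ?I lam)) =
       (\<lambda>a b. if a \<in> ?I \<and> b \<in> ?I then lam a * rho_c n c x a b * cnj (lam b) else 0)"
      using fI by (rule conj_dg)
    have "x \<in> Uv n \<or> x \<in> Vv n" using x by (simp add: verts_def)
    then show "mm ?I (mm ?I (dg ?I lam) (rho_c n c x)) (adj (dg ?I lam)) = rho_c n d x"
    proof
      assume xU: "x \<in> Uv n"
      then have xV: "x \<notin> Vc n c" "x \<notin> Vc n d" using Vc_Vv UV_disj by blast+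
      show ?thesis
      proof (cases "x \<in> ?I")
        case True
        then have "rho_c n c x = idm {x}" "rho_c n d x = idm {x}" using UU by (simp_all add: rho_c_U)
        then show ?thesis unfolding cj using True l1[of x] by (auto simp: idm_def fun_eq_iff)
      next
        case False
        then have "rho_c n c x = (\<lambda>_ _. 0)" "rho_c n d x = (\<lambda>_ _. 0)" using UU xV by (simp_all add: rho_c_0)
        then show ?thesis unfolding cj by (simp add: fun_eq_iff)
      qed
    next
      assume xV: "x \<in> Vv n"
      show ?thesis
      proof (rule ext, rule ext)
        fix a b
        show "mm ?I (mm ?I (dg ?I lam) (rho_c n c x)) (adj (dg ?I lam)) a b = rho_c n d x a b"
        proof (cases "x \<in> Vc n c")
          case True
          have "lam x * cnj (lam x) = 1" using l1 True by blast
          then show ?thesis unfolding cj using xV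
            by (simp add: rho_c_Vv cd)
        next
          case False
          then have "ce n c a x = 0" "ce n c b x = 0" by (simp_all add: ce_V)
          then show ?thesis unfolding cj using xV by (simp add: rho_c_Vv cd)
        qed
      qed
    qed
  qed
qed

definition ip :: "'a set \<Rightarrow> ('a \<Rightarrow> complex) \<Rightarrow> ('a \<Rightarrow> complex) \<Rightarrow> complex" where
  "ip I v w = (\<Sum>a\<in>I. v a * cnj (w a))"

lemma ip_cnj: "cnj (ip I v w) = ip I w v"
  by (simp add: ip_def cnj_sum mult.commute)

lemma parseval:
  assumes fS: "finite S" and fI: "finite I"
    and res: "\<And>a b. (\<Sum>s\<in>S. f s a * cnj (f s b)) = idm I a b"
  shows "(\<Sum>s\<in>S. ip I (f s) x * cnj (ip I (f s) y)) = ip I y x"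
proof -
  have "(\<Sum>s\<in>S. ip I (f s) x * cnj (ip I (f s) y))
      = (\<Sum>s\<in>S. \<Sum>a\<in>I. \<Sum>b\<in>I. (f s a * cnj (f s b)) * (cnj (x a) * y b))"
    unfolding ip_def by (simp add: cnj_sum sum_distrib_left sum_distrib_right algebra_simps)
  also have "\<dots> = (\<Sum>a\<in>I. \<Sum>b\<in>I. \<Sum>s\<in>S. (f s a * cnj (f s b)) * (cnj (x a) * y b))"
    by (simp add: sum.swap[of _ S] sum.swap[of _ S I])
  also have "\<dots> = (\<Sum>a\<in>I. \<Sum>b\<in>I. idm I a b * (cnj (x a) * y b))"
    by (simp add: sum_distrib_right[symmetric] res)
  also have "\<dots> = (\<Sum>a\<in>I. cnj (x a) * y a)"
    using fI by (simp add: idm_def ifm1 sum.delta cong: if_cong)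
  also have "\<dots> = ip I y x" by (simp add: ip_def mult.commute)
  finally show ?thesis .
qed

lemma sq_nonneg_real: "(z::complex) * cnj z = complex_of_real ((cmod z)^2)"
  by (rule complex_norm_square[symmetric])

lemma orthonormal:
  assumes fS: "finite S" and fI: "finite I"
    and res: "\<And>a b. (\<Sum>s\<in>S. f s a * cnj (f s b)) = idm I a b"
    and nrm: "\<And>s. s \<in> S \<Longrightarrow> ip I (f s) (f s) = 1"
    and s: "s \<in> S" and t: "t \<in> S"
  shows "ip I (f s) (f t) = (if s = t then 1 else 0)"
proof (cases "s = t")
  case True then show ?thesis using nrm t by simp
next
  case False
  have "(\<Sum>r\<in>S. ip I (f r) (f t) * cnj (ip I (f r) (f t))) = 1"
    using parseval[OF fS fI res] nrm[OF t] by simp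
  then have "complex_of_real (\<Sum>r\<in>S. (cmod (ip I (f r) (f t)))^2) = 1"
    by (simp add: sq_nonneg_real)
  then have s1: "(\<Sum>r\<in>S. (cmod (ip I (f r) (f t)))^2) = 1"
    using of_real_eq_1_iff by blast
  have "(\<Sum>r\<in>S. (cmod (ip I (f r) (f t)))^2) = (cmod (ip I (f t) (f t)))^2 + (\<Sum>r\<in>S-{t}. (cmod (ip I (f r) (f t)))^2)"
    using fS t by (simp add: sum.remove)
  then have "(\<Sum>r\<in>S-{t}. (cmod (ip I (f r) (f t)))^2) = 0" using s1 nrm[OF t] by simp
  then have "\<forall>r\<in>S-{t}. (cmod (ip I (f r) (f t)))^2 = 0"
    using fS by (simp add: sum_nonneg_eq_0_iff)
  then have "(cmod (ip I (f s) (f t)))^2 = 0" using s False by blast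
  then show ?thesis using False by simp
qed

lemma conj_rank1:
  "mm I (mm I W (\<lambda>a b. v a * cnj (v b))) (adj W) =
     (\<lambda>i i'. (\<Sum>k\<in>I. W i k * v k) * cnj (\<Sum>k\<in>I. W i' k * v k))"
  unfolding mm_def adj_def
  by (simp add: fun_eq_iff cnj_sum sum_distrib_left sum_distrib_right algebra_simps)

lemma sum_nz_ex: "(\<Sum>s\<in>S. g s) \<noteq> (0::complex) \<Longrightarrow> \<exists>s\<in>S. g s \<noteq> 0"
  by (meson sum.neutral)

lemma sum_supp_eq:
  assumes "finite A" "finite B" "\<And>i. g i \<noteq> (0::complex) \<Longrightarrow> i \<in> A \<longleftrightarrow> i \<in> B"
  shows "sum g A = sum g B"
proof -
  have "sum g A = sum g (A \<inter> B)"
    by (rule sum.mono_neutral_right) (use assms in auto)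
  also have "\<dots> = sum g B"
    by (rule sum.mono_neutral_left) (use assms in auto)
  finally show ?thesis .
qed

lemma nbrs_fin: "finite (nbrs n x)"
proof (rule finite_subset)
  show "nbrs n x \<subseteq> {..<2^n}"
  proof
    fix y assume "y \<in> nbrs n x"
    then have "x < 2^n" "\<exists>k<n. y = flip_bit k x" by (auto simp: nbrs_iff)
    then show "y \<in> {..<2^n}" using flip_lt by auto
  qed
qed simp

lemma Uv_fin: "finite (Uv n)" by (simp add: Uv_def)
lemma Vv_fin: "finite (Vv n)" by (simp add: Vv_def)

lemma nbrs_sym: "y \<in> nbrs n x \<longleftrightarrow> x \<in> nbrs n y" by (auto simp: nbrs_def)

lemma rank1_vec:
  assumes "is_rank_one_proj I P"
  shows "\<exists>v. (\<forall>a. a \<notin> I \<longrightarrow> v a = 0) \<and> ip I v v = 1 \<and> P = (\<lambda>a b. v a * cnj (v b))"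
proof -
  obtain v where v: "\<forall>a. a \<notin> I \<longrightarrow> v a = 0" "(\<Sum>a\<in>I. (cmod (v a))\<^sup>2) = 1" "P = (\<lambda>a b. v a * cnj (v b))"
    using assms unfolding is_rank_one_proj_def by blast
  have "ip I v v = complex_of_real (\<Sum>a\<in>I. (cmod (v a))\<^sup>2)"
    unfolding ip_def by (simp add: sq_nonneg_real)
  then have "ip I v v = 1" using v(2) by simp
  then show ?thesis using v by blast
qed

lemma ip_nz_ex: "ip I v v = 1 \<Longrightarrow> \<exists>a\<in>I. v a \<noteq> 0"
proof (rule ccontr)
  assume "ip I v v = 1" "\<not> (\<exists>a\<in>I. v a \<noteq> 0)"
  then have "ip I v v = 0" unfolding ip_def by (intro sum.neutral) simp
  then show False using \<open>ip I v v = 1\<close> by simp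
qed

lemma part4:
  fixes I :: "'a set" and \<rho> :: "nat \<Rightarrow> 'a \<Rightarrow> 'a \<Rightarrow> complex"
  assumes fI: "finite I" and r1: "is_rank_one_rep n I \<rho>"
  shows "\<exists>d. admissible n d \<and> unit_equiv n I \<rho> (Uc n d) (rho_c n d)"
proof -
  have sumU: "(\<lambda>a b. \<Sum>u\<in>Uv n. \<rho> u a b) = idm I" and sumV: "(\<lambda>a b. \<Sum>v\<in>Vv n. \<rho> v a b) = idm I"
    and orth: "\<forall>u\<in>Uv n. \<forall>v\<in>Vv n. v \<notin> nbrs n u \<longrightarrow> mm I (\<rho> u) (\<rho> v) = (\<lambda>_ _. 0)"
    and rk: "\<forall>x\<in>verts n. \<rho> x = (\<lambda>_ _. 0) \<or> is_rank_one_proj I (\<rho> x)"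
    using r1 unfolding is_rank_one_rep_def is_rep_def by blast+
  define U' where "U' = {u\<in>Uv n. \<rho> u \<noteq> (\<lambda>_ _. 0)}"
  define V' where "V' = {v\<in>Vv n. \<rho> v \<noteq> (\<lambda>_ _. 0)}"
  have fU': "finite U'" unfolding U'_def using Uv_fin by simp
  have fV': "finite V'" unfolding V'_def using Vv_fin by simp
  have U'U: "U' \<subseteq> Uv n" and V'V: "V' \<subseteq> Vv n" by (auto simp: U'_def V'_def)
  have "\<forall>x\<in>U' \<union> V'. \<exists>v. (\<forall>a. a \<notin> I \<longrightarrow> v a = 0) \<and> ip I v v = 1 \<and> \<rho> x = (\<lambda>a b. v a * cnj (v b))"
  proof
    fix x assume x: "x \<in> U' \<union> V'"
    then have "x \<in> verts n" "\<rho> x \<noteq> (\<lambda>_ _. 0)" by (auto simp: U'_def V'_def verts_def)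
    then have "is_rank_one_proj I (\<rho> x)" using rk by blast
    then show "\<exists>v. (\<forall>a. a \<notin> I \<longrightarrow> v a = 0) \<and> ip I v v = 1 \<and> \<rho> x = (\<lambda>a b. v a * cnj (v b))"
      by (rule rank1_vec)
  qed
  then obtain e where e: "\<forall>x\<in>U' \<union> V'. (\<forall>a. a \<notin> I \<longrightarrow> e x a = 0) \<and> ip I (e x) (e x) = 1 \<and> \<rho> x = (\<lambda>a b. e x a * cnj (e x b))"
    by metis
  have esupp: "e x a = 0" if "x \<in> U' \<union> V'" "a \<notin> I" for x a using e that by blast
  have enorm: "ip I (e x) (e x) = 1" if "x \<in> U' \<union> V'" for x using e that by blast
  have erho: "\<rho> x = (\<lambda>a b. e x a * cnj (e x b))" if "x \<in> U' \<union> V'" for x using e that by blast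
  have resU: "(\<Sum>u\<in>U'. e u a * cnj (e u b)) = idm I a b" for a b
  proof -
    have "(\<Sum>u\<in>U'. e u a * cnj (e u b)) = (\<Sum>u\<in>U'. \<rho> u a b)"
      by (rule sum.cong) (simp_all add: erho)
    also have "\<dots> = (\<Sum>u\<in>Uv n. \<rho> u a b)"
      by (rule sum.mono_neutral_left) (auto simp: Uv_fin U'_def)
    also have "\<dots> = idm I a b" using sumU by (simp add: fun_eq_iff)
    finally show ?thesis .
  qed
  have resV: "(\<Sum>v\<in>V'. e v a * cnj (e v b)) = idm I a b" for a b
  proof -
    have "(\<Sum>v\<in>V'. e v a * cnj (e v b)) = (\<Sum>v\<in>V'. \<rho> v a b)"
      by (rule sum.cong) (simp_all add: erho)
    also have "\<dots> = (\<Sum>v\<in>Vv n. \<rho> v a b)"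
      by (rule sum.mono_neutral_left) (auto simp: Vv_fin V'_def)
    also have "\<dots> = idm I a b" using sumV by (simp add: fun_eq_iff)
    finally show ?thesis .
  qed
  have orthE: "ip I (e u) (e u') = (if u = u' then 1 else 0)" if "u \<in> U'" "u' \<in> U'" for u u'
    by (rule orthonormal[OF fU' fI resU _ that]) (simp add: enorm)
  have orthW: "ip I (e v) (e v') = (if v = v' then 1 else 0)" if "v \<in> V'" "v' \<in> V'" for v v'
    by (rule orthonormal[OF fV' fI resV _ that]) (simp add: enorm)
  have N: "ip I (e j) (e i) = 0" if i: "i \<in> U'" and j: "j \<in> V'" and nb: "j \<notin> nbrs n i" for i j
  proof -
    have "mm I (\<rho> i) (\<rho> j) = (\<lambda>_ _. 0)" using orth i j nb U'U V'V by blast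
    moreover have "mm I (\<rho> i) (\<rho> j) = (\<lambda>a b. e i a * cnj (e j b) * ip I (e j) (e i))"
      using i j unfolding mm_def ip_def
      by (simp add: erho fun_eq_iff sum_distrib_left sum_distrib_right algebra_simps)
    ultimately have z0: "(\<lambda>a b. e i a * cnj (e j b) * ip I (e j) (e i)) = (\<lambda>_ _. 0)" by simp
    have z: "e i a * cnj (e j b) * ip I (e j) (e i) = 0" for a b
      using fun_cong[OF fun_cong[OF z0, of a], of b] by simp
    obtain a where "e i a \<noteq> 0" using ip_nz_ex[OF enorm[of i]] i by blast
    moreover obtain b where "e j b \<noteq> 0" using ip_nz_ex[OF enorm[of j]] j by blast
    ultimately show ?thesis using z[of a b] by simp
  qed
  define d where "d i j = (if i \<in> U' \<and> j \<in> V' then ip I (e j) (e i) else 0)" for i j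
  have dnz: "i \<in> U' \<and> j \<in> V' \<and> (i,j) \<in> Ed n" if "d i j \<noteq> 0" for i j
  proof -
    have ij: "i \<in> U'" "j \<in> V'" using that by (auto simp: d_def split: if_splits)
    then have "ip I (e j) (e i) \<noteq> 0" using that by (simp add: d_def)
    then have "j \<in> nbrs n i" using N ij by blast
    then show ?thesis using ij U'U Ed_nbrs by blast
  qed
  have ced: "ce n d i j = d i j" for i j
    using dnz[of i j] by (auto simp: ce_def)
  have EcD: "(i,j) \<in> Ec n d \<longleftrightarrow> d i j \<noteq> 0" for i j
    using dnz[of i j] by (auto simp: Ec_def)
  have UcD: "Uc n d = U'"
  proof
    show "Uc n d \<subseteq> U'"
    proof
      fix i assume "i \<in> Uc n d"
      then obtain j where "(i,j) \<in> Ec n d" by (auto simp: Uc_iff)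
      then show "i \<in> U'" using EcD dnz by blast
    qed
    show "U' \<subseteq> Uc n d"
    proof
      fix i assume i: "i \<in> U'"
      have "(\<Sum>j\<in>V'. ip I (e j) (e i) * cnj (ip I (e j) (e i))) = ip I (e i) (e i)"
        by (rule parseval[OF fV' fI resV])
      then have "(\<Sum>j\<in>V'. ip I (e j) (e i) * cnj (ip I (e j) (e i))) \<noteq> 0" using enorm i by simp
      then obtain j where j: "j \<in> V'" "ip I (e j) (e i) \<noteq> 0" using sum_nz_ex by fastforce
      then have "d i j \<noteq> 0" using i by (simp add: d_def)
      then show "i \<in> Uc n d" using EcD Uc_iff by blast
    qed
  qed
  have VcD: "Vc n d = V'"
  proof
    show "Vc n d \<subseteq> V'"
    proof
      fix j assume "j \<in> Vc n d"
      then obtain i where "(i,j) \<in> Ec n d" by (auto simp: Vc_iff)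
      then show "j \<in> V'" using EcD dnz by blast
    qed
    show "V' \<subseteq> Vc n d"
    proof
      fix j assume j: "j \<in> V'"
      have "(\<Sum>i\<in>U'. ip I (e i) (e j) * cnj (ip I (e i) (e j))) = ip I (e j) (e j)"
        by (rule parseval[OF fU' fI resU])
      then have "(\<Sum>i\<in>U'. ip I (e i) (e j) * cnj (ip I (e i) (e j))) \<noteq> 0" using enorm j by simp
      then obtain i where i: "i \<in> U'" "ip I (e i) (e j) \<noteq> 0" using sum_nz_ex by fastforce
      then have "ip I (e j) (e i) \<noteq> 0" using ip_cnj[of I "e i" "e j"] by (metis complex_cnj_zero_iff)
      then have "d i j \<noteq> 0" using i j by (simp add: d_def)
      then show "j \<in> Vc n d" using EcD Vc_iff by blast
    qed
  qed
  have adm: "admissible n d"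
    unfolding admissible_def
  proof (intro conjI ballI)
    fix j1 j2 assume j1: "j1 \<in> Vc n d" and j2: "j2 \<in> Vc n d"
    have "(\<Sum>i\<in>nbrs n j1 \<inter> nbrs n j2. d i j1 * cnj (d i j2)) = (\<Sum>i\<in>U'. d i j1 * cnj (d i j2))"
    proof (rule sum_supp_eq)
      show "finite (nbrs n j1 \<inter> nbrs n j2)" using nbrs_fin by blast
      show "finite U'" by (rule fU')
      fix i assume "d i j1 * cnj (d i j2) \<noteq> 0"
      then have "d i j1 \<noteq> 0" "d i j2 \<noteq> 0" by auto
      then have "i \<in> U'" "(i,j1) \<in> Ed n" "(i,j2) \<in> Ed n" using dnz by blast+
      then show "i \<in> nbrs n j1 \<inter> nbrs n j2 \<longleftrightarrow> i \<in> U'" by (auto simp: nbrs_def)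
    qed
    also have "\<dots> = (\<Sum>i\<in>U'. ip I (e i) (e j2) * cnj (ip I (e i) (e j1)))"
    proof (rule sum.cong)
      fix i assume i: "i \<in> U'"
      have "d i j1 = cnj (ip I (e i) (e j1))" "d i j2 = cnj (ip I (e i) (e j2))"
        using i j1 j2 VcD by (simp_all add: d_def ip_cnj)
      then show "d i j1 * cnj (d i j2) = ip I (e i) (e j2) * cnj (ip I (e i) (e j1))"
        by (simp add: mult.commute)
    qed simp
    also have "\<dots> = ip I (e j1) (e j2)" by (rule parseval[OF fU' fI resU])
    also have "\<dots> = (if j1 = j2 then 1 else 0)" using orthW j1 j2 VcD by simp
    finally show "(\<Sum>i\<in>nbrs n j1 \<inter> nbrs n j2. d i j1 * cnj (d i j2)) = (if j1 = j2 then 1 else 0)" .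
  next
    fix i1 i2 assume i1: "i1 \<in> Uc n d" and i2: "i2 \<in> Uc n d"
    have "(\<Sum>j\<in>nbrs n i1 \<inter> nbrs n i2. d i1 j * cnj (d i2 j)) = (\<Sum>j\<in>V'. d i1 j * cnj (d i2 j))"
    proof (rule sum_supp_eq)
      show "finite (nbrs n i1 \<inter> nbrs n i2)" using nbrs_fin by blast
      show "finite V'" by (rule fV')
      fix j assume "d i1 j * cnj (d i2 j) \<noteq> 0"
      then have "d i1 j \<noteq> 0" "d i2 j \<noteq> 0" by auto
      then have "j \<in> V'" "(i1,j) \<in> Ed n" "(i2,j) \<in> Ed n" using dnz by blast+
      then show "j \<in> nbrs n i1 \<inter> nbrs n i2 \<longleftrightarrow> j \<in> V'" by (auto simp: nbrs_def)
    qed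
    also have "\<dots> = (\<Sum>j\<in>V'. ip I (e j) (e i1) * cnj (ip I (e j) (e i2)))"
      using i1 i2 UcD by (intro sum.cong) (auto simp: d_def)
    also have "\<dots> = ip I (e i2) (e i1)" by (rule parseval[OF fV' fI resV])
    also have "\<dots> = (if i1 = i2 then 1 else 0)" using orthE i1 i2 UcD by auto
    finally show "(\<Sum>j\<in>nbrs n i1 \<inter> nbrs n i2. d i1 j * cnj (d i2 j)) = (if i1 = i2 then 1 else 0)" .
  qed
  define W where "W u a = (if u \<in> U' then cnj (e u a) else 0)" for u a
  have Wv: "(\<Sum>k\<in>I. W i k * v k) = (if i \<in> U' then ip I v (e i) else 0)" for i v
    unfolding W_def ip_def by (simp add: mult.commute)
  have ue: "unit_equiv n I \<rho> (Uc n d) (rho_c n d)"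
    unfolding unit_equiv_def
  proof (intro exI[of _ W] conjI ballI)
    show "mat_on (Uc n d) I W"
      unfolding mat_on_def W_def UcD using esupp by auto
    show "mm I W (adj W) = idm (Uc n d)"
    proof (rule ext, rule ext)
      fix u u'
      have "mm I W (adj W) u u' = (if u \<in> U' \<and> u' \<in> U' then ip I (e u') (e u) else 0)"
        unfolding mm_def adj_def W_def ip_def by (auto simp: mult.commute)
      also have "\<dots> = idm (Uc n d) u u'" using orthE UcD by (auto simp: idm_def)
      finally show "mm I W (adj W) u u' = idm (Uc n d) u u'" .
    qed
    show "mm (Uc n d) (adj W) W = idm I"
    proof (rule ext, rule ext)
      fix a b
      have "mm (Uc n d) (adj W) W a b = (\<Sum>u\<in>U'. e u a * cnj (e u b))"
        unfolding mm_def adj_def W_def UcD by (intro sum.cong) auto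
      then show "mm (Uc n d) (adj W) W a b = idm I a b" using resU by simp
    qed
  next
    fix x assume x: "x \<in> verts n"
    show "mm I (mm I W (\<rho> x)) (adj W) = rho_c n d x"
    proof (cases "x \<in> U' \<union> V'")
      case True
      have cj: "mm I (mm I W (\<rho> x)) (adj W) = (\<lambda>i i'. (if i \<in> U' then ip I (e x) (e i) else 0) *
                    cnj (if i' \<in> U' then ip I (e x) (e i') else 0))"
        unfolding erho[OF True] conj_rank1 Wv by simp
      show ?thesis
      proof (cases "x \<in> U'")
        case True
        then have "rho_c n d x = idm {x}" using UcD by (simp add: rho_c_U)
        then show ?thesis unfolding cj using True orthE by (auto simp: idm_def fun_eq_iff)
      next
        case False
        then have xV: "x \<in> V'" using \<open>x \<in> U' \<union> V'\<close> by blast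
        then have "rho_c n d x = (\<lambda>a b. ce n d a x * cnj (ce n d b x))" using VcD by (simp add: rho_c_V)
        then show ?thesis unfolding cj ced using xV by (auto simp: d_def fun_eq_iff)
      qed
    next
      case False
      then have "\<rho> x = (\<lambda>_ _. 0)" using x by (auto simp: U'_def V'_def verts_def)
      moreover have "rho_c n d x = (\<lambda>_ _. 0)" using False UcD VcD by (simp add: rho_c_0)
      ultimately show ?thesis by (simp add: mm_def fun_eq_iff)
    qed
  qed
  show ?thesis using adm ue by blast
qed

theorem lemma4p6:
  fixes n :: nat and c c' :: "nat \<Rightarrow> nat \<Rightarrow> complex"
  assumes "n \<ge> 1" and "admissible n c"
  shows
    "(\<forall>Xs. (\<forall>X\<in>Xs. is_subcube n X) \<and>
           (\<forall>X\<in>Xs. \<forall>Y\<in>Xs. X \<noteq> Y \<longrightarrow> X \<inter> Y = {}) \<and>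
           Uc n c \<union> Vc n c = \<Union>Xs \<and>
           Ec n c = (\<Union>X\<in>Xs. induced_edges n X)
         \<longrightarrow> direct_sum_irred n (Uc n c) (rho_c n c) Xs)
     \<and> (irreducible n (Uc n c) (rho_c n c) \<longleftrightarrow>
         (\<exists>X. is_subcube n X \<and> Uc n c \<union> Vc n c = X \<and> Ec n c = induced_edges n X))
     \<and> (admissible n c' \<longrightarrow>
         (unit_equiv n (Uc n c) (rho_c n c) (Uc n c') (rho_c n c') \<longleftrightarrow>
           Uc n c' = Uc n c \<and> Vc n c' = Vc n c \<and> Ec n c' = Ec n c \<and>
           (\<exists>lam :: nat \<Rightarrow> complex. (\<forall>x\<in>Uc n c \<union> Vc n c. cmod (lam x) = 1) \<and>
              (\<forall>(i, j)\<in>Ec n c. c' i j = lam i * lam j * c i j))))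
     \<and> (\<forall>(I :: 'a set) \<rho>. finite I \<and> is_rank_one_rep n I \<rho> \<longrightarrow>
         (\<exists>d. admissible n d \<and> unit_equiv n I \<rho> (Uc n d) (rho_c n d)))"
  proof (intro conjI allI impI)
  fix Xs assume h: "(\<forall>X\<in>Xs. is_subcube n X) \<and>
           (\<forall>X\<in>Xs. \<forall>Y\<in>Xs. X \<noteq> Y \<longrightarrow> X \<inter> Y = {}) \<and>
           Uc n c \<union> Vc n c = \<Union>Xs \<and>
           Ec n c = (\<Union>X\<in>Xs. induced_edges n X)"
  show "direct_sum_irred n (Uc n c) (rho_c n c) Xs"
    by (rule part1) (use h in blast)+
next
  show "irreducible n (Uc n c) (rho_c n c) \<longleftrightarrow>
         (\<exists>X. is_subcube n X \<and> Uc n c \<union> Vc n c = X \<and> Ec n c = induced_edges n X)"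
    by (rule irr_iff[OF assms(2)])
next
  assume "admissible n c'"
  show "unit_equiv n (Uc n c) (rho_c n c) (Uc n c') (rho_c n c') \<longleftrightarrow>
           Uc n c' = Uc n c \<and> Vc n c' = Vc n c \<and> Ec n c' = Ec n c \<and>
           (\<exists>lam :: nat \<Rightarrow> complex. (\<forall>x\<in>Uc n c \<union> Vc n c. cmod (lam x) = 1) \<and>
              (\<forall>(i, j)\<in>Ec n c. c' i j = lam i * lam j * c i j))"
  proof
    assume "unit_equiv n (Uc n c) (rho_c n c) (Uc n c') (rho_c n c')"
    then show "Uc n c' = Uc n c \<and> Vc n c' = Vc n c \<and> Ec n c' = Ec n c \<and>
           (\<exists>lam :: nat \<Rightarrow> complex. (\<forall>x\<in>Uc n c \<union> Vc n c. cmod (lam x) = 1) \<and>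
              (\<forall>(i, j)\<in>Ec n c. c' i j = lam i * lam j * c i j))" by (rule ue_fwd)
  next
    assume h: "Uc n c' = Uc n c \<and> Vc n c' = Vc n c \<and> Ec n c' = Ec n c \<and>
           (\<exists>lam :: nat \<Rightarrow> complex. (\<forall>x\<in>Uc n c \<union> Vc n c. cmod (lam x) = 1) \<and>
              (\<forall>(i, j)\<in>Ec n c. c' i j = lam i * lam j * c i j))"
    then obtain lam where "\<forall>x\<in>Uc n c \<union> Vc n c. cmod (lam x) = 1"
      "\<forall>(i, j)\<in>Ec n c. c' i j = lam i * lam j * c i j" by blast
    then show "unit_equiv n (Uc n c) (rho_c n c) (Uc n c') (rho_c n c')"
      using h by (intro ue_bwd) blast+
  qed
next
  fix I :: "'a set" and \<rho>
  assume "finite I \<and> is_rank_one_rep n I \<rho>"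
  then show "\<exists>d. admissible n d \<and> unit_equiv n I \<rho> (Uc n d) (rho_c n d)"
    using part4 by blast
qed

end
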